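(* Let $a=(a_{ij})_{1\le i\le j\le n}\in(\mathbb C^\times)^N$, $b\in\mathbb C^N$, $\lambda\in\mathbb C^n$ and $m\in\{0,\dots,l-1\}^N$. In the Schnizer module $V_\varepsilon(a,b,\lambda)$, $$F_{\theta_n}v(m)=\sum_{r^s\in R^F}(-1)^{s+n}a(\epsilon_{r^s})\varepsilon^{C(m+b,r^s)-\lambda^{(s)}+1-s}[-m_{s-1,s-1}+m_{s,s}-b_{s-1,s-1}+b_{s,s}-\lambda_s]_\varepsilon\,v(m+\epsilon_{r^s}),$$ $$E_{\theta_n}v(m)=\sum_{r^s\in R^E}(-1)^{s+n}a(\alpha_{r^s})\varepsilon^{D(m+b,r^s)+1-s}[-m_{1,n-s+1}-b_{1,n-s+1}]_\varepsilon\,v(m+\alpha_{r^s}),$$ where $\lambda^{(s)}=\sum_{k=1}^{s-1}\lambda_k-\sum_{k=s+1}^n\lambda_k$.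
   Context: $n\ge1$, $I=\{1,\dots,n\}$, $N=n(n+1)/2$; $l>2$ odd, $\gcd(l,n+1)=1$, $\varepsilon$ a primitive $l$-th root of unity; complex powers of $\varepsilon$ use a fixed logarithm; $[c]_\varepsilon=(\varepsilon^c-\varepsilon^{-c})/(\varepsilon-\varepsilon^{-1})$; $[u,v]_x=uv-xvu$. $U_\varepsilon$: $\mathbb C$-algebra generated by $E_i,F_i,K_\mu$ ($i\in I$, $\mu$ in the root lattice of $\mathfrak{sl}_{n+1}$) with the relations of $U_q(\mathfrak{sl}_{n+1})$ at $q=\varepsilon$. $F_{\theta_n}=[F_n,[F_{n-1},\dots,[F_2,F_1]_{\varepsilon^{-1}}\dots]_{\varepsilon^{-1}}$, $E_{\theta_n}=[E_n,[E_{n-1},\dots,[E_2,E_1]_{\varepsilon^{-1}}\dots]_{\varepsilon^{-1}}$. Schnizer module $V_\varepsilon(a,b,\lambda)$: basis $v(m)$, $m=(m_{ij})_{1\le i\le j\le n}\in\{0,\dots,l-1\}^N$, $v(m+lm')=v(m)$; $\epsilon_{ij}$ unit vectors; $\alpha_{i,j}=\sum_{k=j+1}^i\epsilon_{k-1,n-i+k}-\sum_{k=j}^i\epsilon_{k,n-i+k}$ ($j\le i$); for $c\in\mathbb C^N$ ($c_{ij}=0$ outside $1\le i\le j\le n$) $M_{i,j}(c)=\sum_{k=i-1}^{j-1}(c_{i,k}-c_{i-1,k})+\sum_{k=i}^j(c_{i,k}-c_{i+1,k})$, $N_{i,j}(c)=c_{j-1,n-i+j}-c_{j,n-i+j}$,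 $\mu_i(c)=\sum_{k=i-1}^nc_{i-1,k}-2\sum_{k=i}^nc_{i,k}+\sum_{k=i+1}^nc_{i+1,k}$; $a(c)=\prod a_{ij}^{c_{ij}}$ ($c\in\mathbb Z^N$). Action: $E_iv(m)=\sum_{j=1}^ia(\alpha_{i,j})[N_{i,j}(m+b)]_\varepsilon v(m+\alpha_{i,j})$, $F_iv(m)=\sum_{j=i}^na_{i,j}[M_{i,j}(m+b)-\lambda_i]_\varepsilon v(m+\epsilon_{i,j})$, $K_{\alpha_i}v(m)=\varepsilon^{\mu_i(m+b)+\lambda_i}v(m)$. Index sets: for $s\in I$, $R_s=\{r^s\in I^n:r^s_1\ge\dots\ge r^s_{s-1}\ge r^s_s<r^s_{s+1}<\dots<r^s_n\}$, $R^F_s=\{r^s\in R_s:k\le r^s_k\le n\ \forall k\}$, $R^E_s=\{r^s\in R_s:1\le r^s_k\le k\ \forall k\}$, $R^F=\bigsqcup_sR^F_s$, $R^E=\bigsqcup_sR^E_s$; $\epsilon_{r^s}=\sum_k\epsilon_{k,r^s_k}$, $\alpha_{r^s}=\sum_k\alpha_{k,r^s_k}$. With $r^s_0:=n$: $C(c,r^s)=c_{s-1,s-1}-c_{n,n}+\sum_{k=1}^nc_{1,k}+\sum_{k=1}^{s-1}\sum_{p=r^s_{k+1}}^{r^s_k-1}c_{k,p}-\sum_{k=1}^s\sum_{p=r^s_k+1}^{r^s_{k-1}}c_{k,p}$ ($r^s\in R^F_s$); $D(c,r^s)=-\sum_{k=n-s+2}^nc_{1,k}-\sum_{k=s+1}^n(c_{r^s_k-1,n-k+r^s_k}-c_{r^s_k,n-k+r^s_k})$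 ($r^s\in R^E_s$). *)

theory Defs
  imports Complex_Main
begin

(* Arrays indexed by pairs (i,j); only the triangle 1 <= i <= j <= n is meaningful. *)
type_synonym iarr = "nat \<Rightarrow> nat \<Rightarrow> int"
type_synonym carr = "nat \<Rightarrow> nat \<Rightarrow> complex"
(* vectors of the Schnizer module: coefficient functions on the labels m *)
type_synonym vec = "iarr \<Rightarrow> complex"

definition tri :: "nat \<Rightarrow> nat \<Rightarrow> nat \<Rightarrow> bool" where
  "tri n i j \<longleftrightarrow> 1 \<le> i \<and> i \<le> j \<and> j \<le> n"

definition ent :: "nat \<Rightarrow> carr \<Rightarrow> nat \<Rightarrow> nat \<Rightarrow> complex" where
  "ent n c i j = (if tri n i j then c i j else 0)"

(* complex powers of eps = exp L, with the fixed logarithm L *)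
definition qpow :: "complex \<Rightarrow> complex \<Rightarrow> complex" where
  "qpow L x = exp (x * L)"

definition qnum :: "complex \<Rightarrow> complex \<Rightarrow> complex" where
  "qnum L x = (qpow L x - qpow L (- x)) / (qpow L 1 - qpow L (- 1))"

definition labels :: "nat \<Rightarrow> nat \<Rightarrow> iarr set" where
  "labels n l = {m. \<forall>i j. (tri n i j \<longrightarrow> 0 \<le> m i j \<and> m i j < int l) \<and>
                            (\<not> tri n i j \<longrightarrow> m i j = 0)}"

definition normlab :: "nat \<Rightarrow> nat \<Rightarrow> iarr \<Rightarrow> iarr" where
  "normlab n l m = (\<lambda>i j. if tri n i j then m i j mod int l else 0)"

(* basis vector v(m), with v(m + l m') = v(m) *)
definition bv :: "nat \<Rightarrow> nat \<Rightarrow> iarr \<Rightarrow> vec" where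
  "bv n l m = (\<lambda>k. if k = normlab n l m then 1 else 0)"

definition lin :: "nat \<Rightarrow> nat \<Rightarrow> (iarr \<Rightarrow> vec) \<Rightarrow> vec \<Rightarrow> vec" where
  "lin n l f w = (\<lambda>k. \<Sum>m\<in>labels n l. w m * f m k)"

definition addi :: "iarr \<Rightarrow> iarr \<Rightarrow> iarr" where
  "addi x y = (\<lambda>i j. x i j + y i j)"

definition unitv :: "nat \<Rightarrow> nat \<Rightarrow> iarr" where
  "unitv i j = (\<lambda>p q. if p = i \<and> q = j then 1 else 0)"

definition alpha :: "nat \<Rightarrow> nat \<Rightarrow> nat \<Rightarrow> iarr" where
  "alpha n i j = (\<lambda>p q. (\<Sum>k\<in>{j+1..i}. unitv (k-1) (n-i+k) p q)
                        - (\<Sum>k\<in>{j..i}. unitv k (n-i+k) p q))"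

definition shiftc :: "iarr \<Rightarrow> carr \<Rightarrow> carr" where
  "shiftc m b = (\<lambda>i j. of_int (m i j) + b i j)"

definition Mfun :: "nat \<Rightarrow> carr \<Rightarrow> nat \<Rightarrow> nat \<Rightarrow> complex" where
  "Mfun n c i j = (\<Sum>k\<in>{i-1..j-1}. ent n c i k - ent n c (i-1) k)
                + (\<Sum>k\<in>{i..j}. ent n c i k - ent n c (i+1) k)"

definition Nfun :: "nat \<Rightarrow> carr \<Rightarrow> nat \<Rightarrow> nat \<Rightarrow> complex" where
  "Nfun n c i j = ent n c (j-1) (n-i+j) - ent n c j (n-i+j)"

definition apow :: "nat \<Rightarrow> carr \<Rightarrow> iarr \<Rightarrow> complex" where
  "apow n a c = (\<Prod>p\<in>{p. tri n (fst p) (snd p)}. a (fst p) (snd p) powi c (fst p) (snd p))"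

definition Ebas :: "nat \<Rightarrow> nat \<Rightarrow> complex \<Rightarrow> carr \<Rightarrow> carr \<Rightarrow> nat \<Rightarrow> iarr \<Rightarrow> vec" where
  "Ebas n l L a b i m = (\<lambda>k. \<Sum>j\<in>{1..i}. apow n a (alpha n i j)
       * qnum L (Nfun n (shiftc m b) i j) * bv n l (addi m (alpha n i j)) k)"

definition Fbas :: "nat \<Rightarrow> nat \<Rightarrow> complex \<Rightarrow> carr \<Rightarrow> carr \<Rightarrow> (nat \<Rightarrow> complex) \<Rightarrow> nat \<Rightarrow> iarr \<Rightarrow> vec" where
  "Fbas n l L a b lam i m = (\<lambda>k. \<Sum>j\<in>{i..n}. a i j
       * qnum L (Mfun n (shiftc m b) i j - lam i) * bv n l (addi m (unitv i j)) k)"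

definition Eop :: "nat \<Rightarrow> nat \<Rightarrow> complex \<Rightarrow> carr \<Rightarrow> carr \<Rightarrow> nat \<Rightarrow> vec \<Rightarrow> vec" where
  "Eop n l L a b i = lin n l (Ebas n l L a b i)"

definition Fop :: "nat \<Rightarrow> nat \<Rightarrow> complex \<Rightarrow> carr \<Rightarrow> carr \<Rightarrow> (nat \<Rightarrow> complex) \<Rightarrow> nat \<Rightarrow> vec \<Rightarrow> vec" where
  "Fop n l L a b lam i = lin n l (Fbas n l L a b lam i)"

definition qcomm :: "(vec \<Rightarrow> vec) \<Rightarrow> (vec \<Rightarrow> vec) \<Rightarrow> complex \<Rightarrow> vec \<Rightarrow> vec" where
  "qcomm U V x w = (\<lambda>k. U (V w) k - x * V (U w) k)"

(* F_{theta_k} = [F_k,[F_{k-1},...,[F_2,F_1]_{eps^-1}...]_{eps^-1}; index 0 unused *)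
fun Fth :: "nat \<Rightarrow> nat \<Rightarrow> complex \<Rightarrow> carr \<Rightarrow> carr \<Rightarrow> (nat \<Rightarrow> complex) \<Rightarrow> nat \<Rightarrow> vec \<Rightarrow> vec" where
  "Fth n l L a b lam 0 = (\<lambda>w k. 0)"
| "Fth n l L a b lam (Suc 0) = Fop n l L a b lam 1"
| "Fth n l L a b lam (Suc (Suc k)) =
     qcomm (Fop n l L a b lam (Suc (Suc k))) (Fth n l L a b lam (Suc k)) (qpow L (-1))"

fun Eth :: "nat \<Rightarrow> nat \<Rightarrow> complex \<Rightarrow> carr \<Rightarrow> carr \<Rightarrow> nat \<Rightarrow> vec \<Rightarrow> vec" where
  "Eth n l L a b 0 = (\<lambda>w k. 0)"
| "Eth n l L a b (Suc 0) = Eop n l L a b 1"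
| "Eth n l L a b (Suc (Suc k)) =
     qcomm (Eop n l L a b (Suc (Suc k))) (Eth n l L a b (Suc k)) (qpow L (-1))"

(* index sets R_s, R^F_s, R^E_s; r : {1..n} -> {1..n}, extended by 0 *)
definition Rset :: "nat \<Rightarrow> nat \<Rightarrow> (nat \<Rightarrow> nat) set" where
  "Rset n s = {r. (\<forall>k. (1 \<le> k \<and> k \<le> n \<longrightarrow> 1 \<le> r k \<and> r k \<le> n) \<and>
                        (\<not> (1 \<le> k \<and> k \<le> n) \<longrightarrow> r k = 0)) \<and>
                  (\<forall>k. 1 \<le> k \<and> k < s \<longrightarrow> r (k+1) \<le> r k) \<and>
                  (\<forall>k. s \<le> k \<and> k < n \<longrightarrow> r k < r (k+1))}"

definition RF :: "nat \<Rightarrow> nat \<Rightarrow> (nat \<Rightarrow> nat) set" where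
  "RF n s = {r \<in> Rset n s. \<forall>k\<in>{1..n}. k \<le> r k \<and> r k \<le> n}"

definition RE :: "nat \<Rightarrow> nat \<Rightarrow> (nat \<Rightarrow> nat) set" where
  "RE n s = {r \<in> Rset n s. \<forall>k\<in>{1..n}. 1 \<le> r k \<and> r k \<le> k}"

definition epsr :: "nat \<Rightarrow> (nat \<Rightarrow> nat) \<Rightarrow> iarr" where
  "epsr n r = (\<lambda>p q. \<Sum>k\<in>{1..n}. unitv k (r k) p q)"

definition alphar :: "nat \<Rightarrow> (nat \<Rightarrow> nat) \<Rightarrow> iarr" where
  "alphar n r = (\<lambda>p q. \<Sum>k\<in>{1..n}. alpha n k (r k) p q)"

definition Cfun :: "nat \<Rightarrow> carr \<Rightarrow> nat \<Rightarrow> (nat \<Rightarrow> nat) \<Rightarrow> complex" where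
  "Cfun n c s r = (let r0 = (\<lambda>k. if k = 0 then n else r k) in
      ent n c (s-1) (s-1) - ent n c n n + (\<Sum>k\<in>{1..n}. ent n c 1 k)
      + (\<Sum>k\<in>{1..s-1}. \<Sum>p\<in>{r0 (k+1)..r0 k - 1}. ent n c k p)
      - (\<Sum>k\<in>{1..s}. \<Sum>p\<in>{r0 k + 1..r0 (k-1)}. ent n c k p))"

definition Dfun :: "nat \<Rightarrow> carr \<Rightarrow> nat \<Rightarrow> (nat \<Rightarrow> nat) \<Rightarrow> complex" where
  "Dfun n c s r = - (\<Sum>k\<in>{n-s+2..n}. ent n c 1 k)
      - (\<Sum>k\<in>{s+1..n}. ent n c (r k - 1) (n-k+r k) - ent n c (r k) (n-k+r k))"

definition lamS :: "nat \<Rightarrow> (nat \<Rightarrow> complex) \<Rightarrow> nat \<Rightarrow> complex" where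
  "lamS n lam s = (\<Sum>k\<in>{1..s-1}. lam k) - (\<Sum>k\<in>{s+1..n}. lam k)"

end

theory Submission
  imports Defs
begin


definition islin :: "(vec \<Rightarrow> vec) \<Rightarrow> bool" where
  "islin T \<longleftrightarrow> (\<forall>u v. T (\<lambda>k. u k + v k) = (\<lambda>k. T u k + T v k)) \<and>
      (\<forall>c u. T (\<lambda>k. c * u k) = (\<lambda>k. c * T u k))"

lemma islin_zero:
  assumes "islin T" shows "T (\<lambda>k. 0) = (\<lambda>k. 0)"
proof -
  have "T (\<lambda>k. 0 * (\<lambda>k. 0::complex) k) = (\<lambda>k. 0 * T (\<lambda>k. 0) k)"
    using spec[OF spec[OF conjunct2[OF assms[unfolded islin_def]], of 0], of "\<lambda>k. 0"] .
  then show ?thesis by simp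
qed

lemma islin_sum:
  assumes "islin T" and "finite A"
  shows "T (\<lambda>k. \<Sum>x\<in>A. c x * v x k) = (\<lambda>k. \<Sum>x\<in>A. c x * T (v x) k)"
  using assms(2)
proof (induction A rule: finite_induct)
  case empty then show ?case using islin_zero[OF assms(1)] by simp
next
  case (insert a F)
  have "T (\<lambda>k. \<Sum>x\<in>insert a F. c x * v x k) = T (\<lambda>k. c a * v a k + (\<Sum>x\<in>F. c x * v x k))"
    using insert by simp
  also have "\<dots> = (\<lambda>k. T (\<lambda>k. c a * v a k) k + T (\<lambda>k. \<Sum>x\<in>F. c x * v x k) k)"
    using spec[OF spec[OF conjunct1[OF assms(1)[unfolded islin_def]], of "\<lambda>k. c a * v a k"], of "\<lambda>k. \<Sum>x\<in>F. c x * v x k"] .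
  also have "\<dots> = (\<lambda>k. c a * T (v a) k + (\<Sum>x\<in>F. c x * T (v x) k))"
  proof -
    have "T (\<lambda>k. c a * v a k) = (\<lambda>k. c a * T (v a) k)"
      using spec[OF spec[OF conjunct2[OF assms(1)[unfolded islin_def]], of "c a"], of "v a"] .
    then show ?thesis using insert.IH by simp
  qed
  finally show ?case using insert by simp
qed

lemma lin_islin: "islin (lin n l f)"
  unfolding islin_def lin_def
  by (simp add: distrib_right sum.distrib sum_distrib_left mult.assoc)

lemma qcomm_islin: "islin U \<Longrightarrow> islin V \<Longrightarrow> islin (qcomm U V z)"
  unfolding islin_def qcomm_def
  by (simp add: algebra_simps)

lemma finite_labels: "finite (labels n l)"
proof -
  let ?In = "{f::nat\<Rightarrow>int. \<forall>x. (x \<in> {1..n} \<longrightarrow> f x \<in> {0..<int l} \<union> {0}) \<and> (x \<notin> {1..n} \<longrightarrow> f x = 0)}"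
  have fin: "finite ?In" by (rule finite_set_of_finite_funs) auto
  have "labels n l \<subseteq> {m. \<forall>x. (x \<in> {1..n} \<longrightarrow> m x \<in> ?In) \<and> (x \<notin> {1..n} \<longrightarrow> m x = (\<lambda>_. 0))}"
    unfolding labels_def tri_def
    by (auto; metis atLeastAtMost_iff linorder_le_less_linear not_le)
  moreover have "finite {m. \<forall>x. (x \<in> {1..n} \<longrightarrow> m x \<in> ?In) \<and> (x \<notin> {1..n} \<longrightarrow> m x = (\<lambda>_. 0))}"
    by (rule finite_set_of_finite_funs, simp, rule fin)
  ultimately show ?thesis by (rule finite_subset)
qed

lemma normlab_labels: "l > 0 \<Longrightarrow> normlab n l m \<in> labels n l"
  unfolding normlab_def labels_def by auto

lemma lin_bv: "l > 0 \<Longrightarrow> lin n l f (bv n l m) = f (normlab n l m)"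
  unfolding lin_def bv_def
  by (simp add: finite_labels normlab_labels if_distrib[of "\<lambda>x. x * _"] cong: if_cong)

lemma normlab_addi: "l > 0 \<Longrightarrow> normlab n l (addi (normlab n l m) d) = normlab n l (addi m d)"
  unfolding normlab_def addi_def by (auto simp: fun_eq_iff mod_add_left_eq)

lemma bv_addi_normlab: "l > 0 \<Longrightarrow> bv n l (addi (normlab n l m) d) = bv n l (addi m d)"
  unfolding bv_def by (simp add: normlab_addi)

lemma addi_assoc: "addi (addi a b) c = addi a (addi b c)"
  unfolding addi_def by (simp add: fun_eq_iff add.assoc)
lemma addi_comm: "addi a b = addi b a"
  unfolding addi_def by (simp add: fun_eq_iff add.commute)

lemma exp_int_mult_1: "exp w = 1 \<Longrightarrow> exp (of_int t * w) = (1::complex)"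
proof (cases t rule: int_cases)
  case (nonneg k)
  assume h: "exp w = 1"
  have "exp (of_int t * w) = exp (of_nat k * w)" using nonneg by simp
  also have "\<dots> = exp w ^ k" by (rule exp_of_nat_mult)
  finally show ?thesis using h by simp
next
  case (neg k)
  assume h: "exp w = 1"
  have c: "(of_int t :: complex) = - of_nat (Suc k)" using neg by simp
  have "exp (of_int t * w) = exp (- (of_nat (Suc k) * w))" unfolding c by (simp only: minus_mult_left)
  also have "\<dots> = inverse (exp (of_nat (Suc k) * w))" by (rule exp_minus)
  also have "exp (of_nat (Suc k) * w) = exp w ^ Suc k" by (rule exp_of_nat_mult)
  finally show ?thesis using h by simp
qed

lemma qpow_add: "qpow L (x + y) = qpow L x * qpow L y"
  unfolding qpow_def by (simp only: distrib_right exp_add)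

lemma qpow_period: "exp L ^ l = 1 \<Longrightarrow> qpow L (x + of_int t * of_nat l) = qpow L x"
proof -
  assume h: "exp L ^ l = 1"
  have "exp (of_nat l * L) = 1" using h by (simp only: exp_of_nat_mult)
  then have e: "exp (of_int t * (of_nat l * L)) = 1" by (rule exp_int_mult_1)
  have "qpow L (x + of_int t * of_nat l) = exp (x * L) * exp (of_int t * (of_nat l * L))"
    unfolding qpow_def by (simp only: distrib_right exp_add mult.assoc)
  then show ?thesis unfolding e qpow_def by simp
qed

lemma qnum_period: "exp L ^ l = 1 \<Longrightarrow> qnum L (x + of_int t * of_nat l) = qnum L x"
proof -
  assume h: "exp L ^ l = 1"
  have "- (x + of_int t * of_nat l) = - x + of_int (- t) * of_nat l" by simp
  then have "qpow L (- (x + of_int t * of_nat l)) = qpow L (-x)"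
    using qpow_period[OF h, of "-x" "-t"] by simp
  then show ?thesis unfolding qnum_def using qpow_period[OF h, of x t] by simp
qed


locale theta =
  fixes n l :: nat and L :: complex
    and X Th :: "nat \<Rightarrow> vec \<Rightarrow> vec"
    and J :: "nat \<Rightarrow> nat set" and g :: "nat \<Rightarrow> nat \<Rightarrow> complex"
    and Phi :: "nat \<Rightarrow> nat \<Rightarrow> iarr \<Rightarrow> complex" and dl :: "nat \<Rightarrow> nat \<Rightarrow> iarr"
  assumes finJ: "\<And>i. finite (J i)"
    and Xlin: "\<And>i. islin (X i)"
    and Xbv: "\<And>i m. 1 \<le> i \<Longrightarrow> i \<le> n \<Longrightarrow> X i (bv n l m) =
        (\<lambda>k. \<Sum>j\<in>J i. g i j * qnum L (Phi i j m) * bv n l (addi m (dl i j)) k)"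
    and Th1: "Th (Suc 0) = X (Suc 0)"
    and ThS: "\<And>k. Th (Suc (Suc k)) = qcomm (X (Suc (Suc k))) (Th (Suc k)) (qpow L (-1))"
    and S1: "\<And>k x y m. 1 \<le> k \<Longrightarrow> k+1 \<le> n \<Longrightarrow> y \<in> J k \<Longrightarrow> x \<in> J (k+1) \<Longrightarrow>
        Phi (k+1) x (addi m (dl k y)) = Phi (k+1) x m - (if y < x then 1 else 0)"
    and S2: "\<And>k x y m. 1 \<le> k \<Longrightarrow> k+1 \<le> n \<Longrightarrow> y \<in> J k \<Longrightarrow> x \<in> J (k+1) \<Longrightarrow>
        Phi k y (addi m (dl (k+1) x)) = Phi k y m - (if x \<le> y then 1 else 0)"
    and S3: "\<And>i i' x y m. 1 \<le> i \<Longrightarrow> i \<le> n \<Longrightarrow> 1 \<le> i' \<Longrightarrow> i' \<le> n \<Longrightarrow>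
        i + 2 \<le> i' \<or> i' + 2 \<le> i \<Longrightarrow> y \<in> J i \<Longrightarrow> x \<in> J i' \<Longrightarrow>
        Phi i y (addi m (dl i' x)) = Phi i y m"
    and qD: "qpow L 1 \<noteq> qpow L (-1)"
begin

definition Sq :: "nat \<Rightarrow> (nat \<Rightarrow> nat) set" where
  "Sq k = {j. (\<forall>i\<in>{1..k}. j i \<in> J i) \<and> (\<forall>i. i \<notin> {1..k} \<longrightarrow> j i = 0)}"

definition dsum :: "nat \<Rightarrow> (nat \<Rightarrow> nat) \<Rightarrow> iarr" where
  "dsum k j = (\<lambda>p q. \<Sum>i\<in>{1..k}. dl i (j i) p q)"

fun w :: "nat \<Rightarrow> iarr \<Rightarrow> (nat \<Rightarrow> nat) \<Rightarrow> complex" where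
  "w 0 m j = 0"
| "w (Suc 0) m j = g 1 (j 1) * qnum L (Phi 1 (j 1) m)"
| "w (Suc (Suc k)) m j = g (Suc (Suc k)) (j (Suc (Suc k))) *
     (w (Suc k) m j * qnum L (Phi (Suc (Suc k)) (j (Suc (Suc k))) m
          - (if j (Suc k) < j (Suc (Suc k)) then 1 else 0))
      - qpow L (-1) * qnum L (Phi (Suc (Suc k)) (j (Suc (Suc k))) m)
          * w (Suc k) (addi m (dl (Suc (Suc k)) (j (Suc (Suc k))))) j)"

lemma Th_lin: "1 \<le> k \<Longrightarrow> islin (Th k)"
proof (induction k)
  case 0 then show ?case by simp
next
  case (Suc k)
  show ?case
  proof (cases k)
    case 0 then show ?thesis using Th1 Xlin by simp
  next
    case (Suc k')
    then show ?thesis using Suc.IH ThS Xlin qcomm_islin by simp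
  qed
qed

lemma finite_Sq: "finite (Sq k)"
proof -
  have "Sq k \<subseteq> {j. \<forall>x. (x \<in> {1..k} \<longrightarrow> j x \<in> \<Union>(J ` {1..k})) \<and> (x \<notin> {1..k} \<longrightarrow> j x = 0)}"
    unfolding Sq_def by blast
  moreover have "finite {j. \<forall>x. (x \<in> {1..k} \<longrightarrow> j x \<in> \<Union>(J ` {1..k})) \<and> (x \<notin> {1..k} \<longrightarrow> j x = 0)}"
    by (rule finite_set_of_finite_funs) (auto simp: finJ)
  ultimately show ?thesis by (rule finite_subset)
qed

lemma Sq_0: "Sq 0 = {\<lambda>_. 0}"
  unfolding Sq_def by auto

lemma Sq_Suc_sum:
  "(\<Sum>j\<in>Sq (Suc k). F j) = (\<Sum>j\<in>Sq k. \<Sum>x\<in>J (Suc k). F (j(Suc k := x)))"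
proof -
  have "(\<Sum>j\<in>Sq k. \<Sum>x\<in>J (Suc k). F (j(Suc k := x)))
      = (\<Sum>p\<in>Sq k \<times> J (Suc k). F ((fst p)(Suc k := snd p)))"
    by (subst sum.cartesian_product) (simp add: case_prod_beta)
  also have "\<dots> = (\<Sum>j\<in>Sq (Suc k). F j)"
  proof (rule sum.reindex_bij_witness[where i = "\<lambda>j. (j(Suc k := 0), j (Suc k))"
        and j = "\<lambda>p. (fst p)(Suc k := snd p)"])
    fix a assume a: "a \<in> Sq k \<times> J (Suc k)"
    then show "((fst a)(Suc k := snd a, Suc k := 0), ((fst a)(Suc k := snd a)) (Suc k)) = a"
      unfolding Sq_def by (cases a) (auto simp: fun_eq_iff)
    show "(fst a)(Suc k := snd a) \<in> Sq (Suc k)" using a unfolding Sq_def by auto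
  next
    fix b assume b: "b \<in> Sq (Suc k)"
    show "(fst (b(Suc k := 0), b (Suc k)))(Suc k := snd (b(Suc k := 0), b (Suc k))) = b"
      by simp
    show "(b(Suc k := 0), b (Suc k)) \<in> Sq k \<times> J (Suc k)" using b unfolding Sq_def by auto
  qed simp
  finally show ?thesis by simp
qed

lemma w_cong: "(\<forall>i\<in>{1..k}. j i = j' i) \<Longrightarrow> w k m j = w k m j'"
proof (induction k m j rule: w.induct)
  case (3 k m j)
  have h: "\<forall>i\<in>{1..Suc k}. j i = j' i" using "3.prems" by auto
  have e1: "j (Suc k) = j' (Suc k)" "j (Suc (Suc k)) = j' (Suc (Suc k))" using "3.prems" by auto
  show ?case using "3.IH"[OF h] by (simp only: w.simps e1)
qed auto

lemma dsum_Suc: "dsum (Suc k) j = addi (dsum k j) (dl (Suc k) (j (Suc k)))"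
  unfolding dsum_def addi_def by (simp add: fun_eq_iff)

lemma dsum_0: "addi m (dsum 0 j) = m"
  unfolding dsum_def addi_def by simp

lemma dsum_cong: "(\<forall>i\<in>{1..k}. j i = j' i) \<Longrightarrow> dsum k j = dsum k j'"
  unfolding dsum_def by (simp add: fun_eq_iff)

lemma Phi_dsum:
  assumes "p \<le> K" "1 \<le> K" "K+1 \<le> n" "j \<in> Sq K" "x \<in> J (K+1)"
  shows "Phi (K+1) x (addi m (dsum p j)) = Phi (K+1) x m - (if p = K \<and> j K < x then 1 else 0)"
  using assms(1)
proof (induction p)
  case 0 then show ?case using assms(2) by (simp add: dsum_0)
next
  case (Suc p)
  have jin: "j (Suc p) \<in> J (Suc p)" using assms(4) Suc.prems unfolding Sq_def by auto
  have eq: "addi m (dsum (Suc p) j) = addi (addi m (dsum p j)) (dl (Suc p) (j (Suc p)))"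
    by (simp add: dsum_Suc addi_assoc)
  show ?case
  proof (cases "Suc p = K")
    case True
    have "Phi (K+1) x (addi (addi m (dsum p j)) (dl K (j K)))
        = Phi (K+1) x (addi m (dsum p j)) - (if j K < x then 1 else 0)"
      using S1[of K "j K" x] assms True jin by simp
    then show ?thesis using Suc.IH Suc.prems True eq by simp
  next
    case False
    have "Phi (K+1) x (addi (addi m (dsum p j)) (dl (Suc p) (j (Suc p))))
        = Phi (K+1) x (addi m (dsum p j))"
      using S3[of "K+1" "Suc p" x "j (Suc p)"] assms False Suc.prems jin by simp
    then show ?thesis using Suc.IH Suc.prems False eq by simp
  qed
qed

lemma Th_bv: "1 \<le> k \<Longrightarrow> k \<le> n \<Longrightarrow>
  Th k (bv n l m) = (\<lambda>kk. \<Sum>j\<in>Sq k. w k m j * bv n l (addi m (dsum k j)) kk)"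
proof (induction k arbitrary: m)
  case 0 then show ?case by simp
next
  case (Suc K)
  show ?case
  proof (cases K)
    case 0
    have d1: "dsum (Suc 0) ((\<lambda>_. 0)(Suc 0 := x)) = dl 1 x" for x
      unfolding dsum_def by simp
    show ?thesis using 0 Suc.prems
      by (simp add: Th1 Xbv Sq_Suc_sum Sq_0 d1)
  next
    case (Suc k)
    have K1: "1 \<le> K" "K \<le> n" "Suc K \<le> n" using Suc Suc.prems by auto
    note IH = Suc.IH[OF K1(1,2)]
    let ?x = "X (Suc K)"
    have A: "?x (Th K (bv n l m)) = (\<lambda>kk. \<Sum>j\<in>Sq K. w K m j *
        (\<Sum>x\<in>J (Suc K). g (Suc K) x * qnum L (Phi (Suc K) x (addi m (dsum K j)))
          * bv n l (addi (addi m (dsum K j)) (dl (Suc K) x)) kk))"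
      unfolding IH using islin_sum[OF Xlin finite_Sq] Xbv[OF _ K1(3)] by simp
    have B: "Th K (?x (bv n l m)) = (\<lambda>kk. \<Sum>x\<in>J (Suc K). g (Suc K) x * qnum L (Phi (Suc K) x m) *
        (\<Sum>j\<in>Sq K. w K (addi m (dl (Suc K) x)) j * bv n l (addi (addi m (dl (Suc K) x)) (dsum K j)) kk))"
      unfolding Xbv[OF _ K1(3), simplified] using islin_sum[OF Th_lin[OF K1(1)] finJ] IH by simp
    have pt: "w (Suc K) m (j(Suc K := x)) * bv n l (addi m (dsum (Suc K) (j(Suc K := x)))) kk
       = w K m j * (g (Suc K) x * qnum L (Phi (Suc K) x (addi m (dsum K j)))
          * bv n l (addi (addi m (dsum K j)) (dl (Suc K) x)) kk)
        - qpow L (-1) * (g (Suc K) x * qnum L (Phi (Suc K) x m) *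
          (w K (addi m (dl (Suc K) x)) j * bv n l (addi (addi m (dl (Suc K) x)) (dsum K j)) kk))"
      if j: "j \<in> Sq K" and x: "x \<in> J (Suc K)" for j x kk
    proof -
      have agree: "\<forall>i\<in>{1..K}. (j(Suc K := x)) i = j i" by simp
      have wc: "w K m' (j(Suc K := x)) = w K m' j" for m' using w_cong[OF agree] .
      have ds: "dsum (Suc K) (j(Suc K := x)) = addi (dsum K j) (dl (Suc K) x)"
        using dsum_Suc[of K "j(Suc K := x)"] dsum_cong[OF agree] by simp
      have ph: "Phi (Suc K) x (addi m (dsum K j)) = Phi (Suc K) x m - (if j K < x then 1 else 0)"
        using Phi_dsum[of K K j x m] K1 j x by simp
      have a1: "addi (addi m (dsum K j)) (dl (Suc K) x) = addi m (addi (dsum K j) (dl (Suc K) x))"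
        by (simp add: addi_assoc)
      have a2: "addi (addi m (dl (Suc K) x)) (dsum K j) = addi m (addi (dsum K j) (dl (Suc K) x))"
        unfolding addi_def by (simp add: fun_eq_iff algebra_simps)
      show ?thesis unfolding ds ph a1 a2 using Suc wc
        by (simp add: algebra_simps)
    qed
    have "Th (Suc K) (bv n l m) = (\<lambda>kk. ?x (Th K (bv n l m)) kk - qpow L (-1) * Th K (?x (bv n l m)) kk)"
      using Suc ThS by (simp add: qcomm_def)
    also have "\<dots> = (\<lambda>kk. \<Sum>j\<in>Sq K. \<Sum>x\<in>J (Suc K).
        w (Suc K) m (j(Suc K := x)) * bv n l (addi m (dsum (Suc K) (j(Suc K := x)))) kk)"
      unfolding A B
      by (simp add: pt sum_subtractf sum_distrib_left sum.swap[of _ "J (Suc K)"] cong: sum.cong)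
    also have "\<dots> = (\<lambda>kk. \<Sum>j\<in>Sq (Suc K). w (Suc K) m j * bv n l (addi m (dsum (Suc K) j)) kk)"
      by (simp add: Sq_Suc_sum)
    finally show ?thesis .
  qed
qed

definition valley :: "nat \<Rightarrow> nat \<Rightarrow> (nat \<Rightarrow> nat) \<Rightarrow> bool" where
  "valley k s j \<longleftrightarrow> 1 \<le> s \<and> s \<le> k \<and> (\<forall>i. 1 \<le> i \<and> i < s \<longrightarrow> j (i+1) \<le> j i)
     \<and> (\<forall>i. s \<le> i \<and> i < k \<longrightarrow> j i < j (i+1))"

definition cfv :: "nat \<Rightarrow> nat \<Rightarrow> (nat \<Rightarrow> complex) \<Rightarrow> (nat \<Rightarrow> nat) \<Rightarrow> complex" where
  "cfv k s \<phi> j = (\<Prod>i\<in>{1..k}. g i (j i)) * (\<Prod>i\<in>{1..<s}. qpow L (\<phi> i - 1)) * qnum L (\<phi> s)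
      * (\<Prod>i\<in>{s<..k}. - qpow L (- \<phi> i))"

definition Rv :: "nat \<Rightarrow> nat \<Rightarrow> (nat \<Rightarrow> complex) \<Rightarrow> (nat \<Rightarrow> nat) \<Rightarrow> complex" where
  "Rv k s \<phi> j = (\<Prod>i\<in>{1..k}. g i (j i)) * (\<Prod>i\<in>{1..<s}. qpow L (\<phi> i - 1)) * qnum L (\<phi> s)
      * (\<Prod>i\<in>{s<..<k}. - qpow L (- \<phi> i))"

definition phis :: "iarr \<Rightarrow> (nat \<Rightarrow> nat) \<Rightarrow> nat \<Rightarrow> complex" where
  "phis m j = (\<lambda>i. Phi i (j i) m)"

lemma qpow_sub1: "qpow L (z - 1) = qpow L z / exp L"
  unfolding qpow_def by (simp add: algebra_simps exp_diff)
lemma qpow_neg: "qpow L (- z) = inverse (qpow L z)"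
  unfolding qpow_def by (simp add: exp_minus)
lemma qpow_one: "qpow L 1 = exp L" unfolding qpow_def by simp
lemma qpow_nz: "qpow L z \<noteq> 0" unfolding qpow_def by simp

lemma qnum_alt: "qnum L z = (qpow L z - inverse (qpow L z)) / (exp L - inverse (exp L))"
  unfolding qnum_def by (simp add: qpow_neg qpow_one)

lemma qD': "exp L - inverse (exp L) \<noteq> 0"
  using qD by (simp add: qpow_neg qpow_one)

lemma qnumD: "qnum L x * (exp L - inverse (exp L)) = qpow L x - inverse (qpow L x)"
  unfolding qnum_alt using qD' by simp

lemma qnum_id1: "qnum L (z - 1) - qpow L (-1) * qnum L z = - qpow L (- z)"
proof -
  have d: "exp L - inverse (exp L) \<noteq> 0" by (rule qD')
  have e: "exp L \<noteq> 0" by simp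
  have u: "qpow L z \<noteq> 0" by (rule qpow_nz)
  have "(qnum L (z - 1) - qpow L (-1) * qnum L z) * (exp L - inverse (exp L))
      = - qpow L (- z) * (exp L - inverse (exp L))"
    unfolding left_diff_distrib mult.assoc qnumD
    unfolding qpow_neg qpow_sub1 qpow_one using e u by (simp add: field_simps)
  then show ?thesis using d mult_right_cancel by blast
qed

lemma qnum_id2: "qnum L z - qpow L (-1) * qnum L (z - 1) = qpow L (z - 1)"
proof -
  have d: "exp L - inverse (exp L) \<noteq> 0" by (rule qD')
  have e: "exp L \<noteq> 0" by simp
  have u: "qpow L z \<noteq> 0" by (rule qpow_nz)
  have "(qnum L z - qpow L (-1) * qnum L (z - 1)) * (exp L - inverse (exp L))
      = qpow L (z - 1) * (exp L - inverse (exp L))"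
    unfolding left_diff_distrib mult.assoc qnumD
    unfolding qpow_neg qpow_sub1 qpow_one using e u by (simp add: field_simps)
  then show ?thesis using d mult_right_cancel by blast
qed

lemma qpow_id3: "- qpow L (- z) - qpow L (-1) * (- qpow L (- (z - 1))) = 0"
  unfolding qpow_def by (simp add: exp_add[symmetric] algebra_simps)

lemma cfv_cong: "1 \<le> s \<Longrightarrow> s \<le> k \<Longrightarrow> (\<forall>i\<in>{1..k}. \<phi> i = \<psi> i) \<Longrightarrow> cfv k s \<phi> j = cfv k s \<psi> j"
  unfolding cfv_def by (auto intro!: prod.cong arg_cong2[where f = "(*)"])

lemma w_step: "1 \<le> K \<Longrightarrow> w (Suc K) m j = g (Suc K) (j (Suc K)) *
   (w K m j * qnum L (Phi (Suc K) (j (Suc K)) m - (if j K < j (Suc K) then 1 else 0))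
    - qpow L (-1) * qnum L (Phi (Suc K) (j (Suc K)) m) * w K (addi m (dl (Suc K) (j (Suc K)))) j)"
  by (cases K) auto

lemma phis_shift:
  assumes "1 \<le> K" "K+1 \<le> n" "\<forall>i\<in>{1..K+1}. j i \<in> J i" "i \<in> {1..K}"
  shows "phis (addi m (dl (Suc K) (j (Suc K)))) j i = phis m j i - (if i = K \<and> j (Suc K) \<le> j K then 1 else 0)"
proof (cases "i = K")
  case True
  then show ?thesis unfolding phis_def using S2[of K "j K" "j (K+1)" m] assms by simp
next
  case False
  then show ?thesis unfolding phis_def using S3[of i "K+1" "j i" "j (K+1)" m] assms by simp
qed

lemma vA: "valley (Suc K) s j \<Longrightarrow> s \<le> K \<Longrightarrow> valley K s j \<and> j K < j (Suc K)"
  unfolding valley_def by auto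
lemma vB: "valley (Suc K) (Suc K) j \<Longrightarrow> 1 \<le> K \<Longrightarrow> valley K K j \<and> j (Suc K) \<le> j K"
  unfolding valley_def by auto
lemma vC1: "valley K K j \<Longrightarrow> j (Suc K) \<le> j K \<Longrightarrow> valley (Suc K) (Suc K) j"
  unfolding valley_def by (auto simp: less_Suc_eq)
lemma vC2: "valley K s j \<Longrightarrow> j K < j (Suc K) \<Longrightarrow> valley (Suc K) s j"
  unfolding valley_def by (auto simp: less_Suc_eq)

lemma cfv_Suc_gt: "1 \<le> s \<Longrightarrow> s \<le> K \<Longrightarrow>
   cfv (Suc K) s \<phi> j = cfv K s \<phi> j * (g (Suc K) (j (Suc K)) * - qpow L (- \<phi> (Suc K)))"
proof -
  assume a: "1 \<le> s" "s \<le> K"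
  have e: "{s<..Suc K} = insert (Suc K) {s<..K}" using a by auto
  show ?thesis unfolding cfv_def e using a by (simp add: prod.cl_ivl_Suc)
qed

lemma cfv_KK: "cfv K K \<phi> j = (\<Prod>i\<in>{1..K}. g i (j i)) * (\<Prod>i\<in>{1..<K}. qpow L (\<phi> i - 1)) * qnum L (\<phi> K)"
  unfolding cfv_def by simp

lemma cfv_SS: "1 \<le> K \<Longrightarrow> cfv (Suc K) (Suc K) \<phi> j = (\<Prod>i\<in>{1..K}. g i (j i)) * g (Suc K) (j (Suc K))
    * (\<Prod>i\<in>{1..<K}. qpow L (\<phi> i - 1)) * qpow L (\<phi> K - 1) * qnum L (\<phi> (Suc K))"
  unfolding cfv_def by (simp add: prod.cl_ivl_Suc)

lemma cfv_lt: "s < K \<Longrightarrow> cfv K s \<phi> j = Rv K s \<phi> j * (- qpow L (- \<phi> K))"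
proof -
  assume a: "s < K"
  have e: "{s<..K} = insert K {s<..<K}" using a by auto
  show ?thesis unfolding cfv_def Rv_def e by simp
qed

lemma Rv_cong: "1 \<le> s \<Longrightarrow> s < K \<Longrightarrow> (\<forall>i\<in>{1..<K}. \<phi> i = \<psi> i) \<Longrightarrow> Rv K s \<phi> j = Rv K s \<psi> j"
  unfolding Rv_def by (auto intro!: prod.cong arg_cong2[where f = "(*)"])

lemma CF: "1 \<le> k \<Longrightarrow> k \<le> n \<Longrightarrow> \<forall>i\<in>{1..k}. j i \<in> J i \<Longrightarrow>
   (\<forall>s. valley k s j \<longrightarrow> w k m j = cfv k s (phis m j) j) \<and> ((\<forall>s. \<not> valley k s j) \<longrightarrow> w k m j = 0)"
proof (induction k arbitrary: m)
  case 0 then show ?case by simp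
next
  case (Suc K)
  show ?case
  proof (cases "K = 0")
    case True
    have v: "valley (Suc 0) s j \<longleftrightarrow> s = Suc 0" for s unfolding valley_def by auto
    show ?thesis using True by (simp add: v cfv_def phis_def)
  next
    case False
    then have K1: "1 \<le> K" "K \<le> n" "K + 1 \<le> n" using Suc.prems by auto
    have jK: "\<forall>i\<in>{1..K}. j i \<in> J i" using Suc.prems by auto
    have jK1: "\<forall>i\<in>{1..K+1}. j i \<in> J i" using Suc.prems by auto
    note IH = Suc.IH[OF K1(1,2) jK]
    define x where "x = j (Suc K)"
    define m' where "m' = addi m (dl (Suc K) x)"
    define \<phi> where "\<phi> = phis m j"
    define \<phi>' where "\<phi>' = phis m' j"
    have sh: "\<forall>i\<in>{1..K}. \<phi>' i = \<phi> i - (if i = K \<and> x \<le> j K then 1 else 0)"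
      unfolding \<phi>_def \<phi>'_def m'_def x_def using phis_shift[OF K1(1,3) jK1] by blast
    have ws: "w (Suc K) m j = g (Suc K) x * (w K m j * qnum L (Phi (Suc K) x m - (if j K < x then 1 else 0))
        - qpow L (-1) * qnum L (Phi (Suc K) x m) * w K m' j)"
      unfolding x_def m'_def using w_step[OF K1(1)] .
    have phiS: "\<phi> (Suc K) = Phi (Suc K) x m" unfolding \<phi>_def phis_def x_def by simp
    have part1: "w (Suc K) m j = cfv (Suc K) s \<phi> j" if vs: "valley (Suc K) s j" for s
    proof (cases "s \<le> K")
      case True
      from vA[OF vs True] have v: "valley K s j" and lt: "j K < x" unfolding x_def by auto
      have s1: "1 \<le> s" using v unfolding valley_def by simp
      have c1: "w K m j = cfv K s \<phi> j" using IH v unfolding \<phi>_def by blast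
      have "w K m' j = cfv K s \<phi>' j" using Suc.IH[OF K1(1,2) jK, of m'] v unfolding \<phi>'_def by blast
      also have "\<dots> = cfv K s \<phi> j" using cfv_cong[OF s1 True] sh lt by simp
      finally have c2: "w K m' j = cfv K s \<phi> j" .
      have "w (Suc K) m j = g (Suc K) x * cfv K s \<phi> j *
          (qnum L (Phi (Suc K) x m - 1) - qpow L (-1) * qnum L (Phi (Suc K) x m))"
        unfolding ws c1 c2 using lt by (simp add: algebra_simps)
      also have "\<dots> = cfv (Suc K) s \<phi> j"
        unfolding qnum_id1 cfv_Suc_gt[OF s1 True] phiS x_def by (simp add: algebra_simps)
      finally show ?thesis .
    next
      case False
      then have sK: "s = Suc K" using vs unfolding valley_def by simp
      from vB[OF vs[unfolded sK] K1(1)] have v: "valley K K j" and le: "x \<le> j K" unfolding x_def by auto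
      have c1: "w K m j = cfv K K \<phi> j" using IH v unfolding \<phi>_def by blast
      have c2: "w K m' j = cfv K K \<phi>' j" using Suc.IH[OF K1(1,2) jK, of m'] v unfolding \<phi>'_def by blast
      have pe: "(\<Prod>i\<in>{1..<K}. qpow L (\<phi>' i - 1)) = (\<Prod>i\<in>{1..<K}. qpow L (\<phi> i - 1))"
        using sh by (intro prod.cong) auto
      have pK: "\<phi>' K = \<phi> K - 1" using sh le K1 by simp
      have "w (Suc K) m j = g (Suc K) x * (\<Prod>i\<in>{1..K}. g i (j i)) * (\<Prod>i\<in>{1..<K}. qpow L (\<phi> i - 1))
          * qnum L (Phi (Suc K) x m) * (qnum L (\<phi> K) - qpow L (-1) * qnum L (\<phi> K - 1))"
        unfolding ws c1 c2 cfv_KK pe pK using le by (simp add: algebra_simps)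
      also have "\<dots> = cfv (Suc K) s \<phi> j"
        unfolding qnum_id2 sK cfv_SS[OF K1(1)] phiS x_def by (simp add: algebra_simps)
      finally show ?thesis .
    qed
    have part2: "w (Suc K) m j = 0" if nv: "\<forall>s. \<not> valley (Suc K) s j"
    proof (cases "\<forall>s. \<not> valley K s j")
      case True
      have "w K m j = 0" using IH True by blast
      moreover have "w K m' j = 0" using Suc.IH[OF K1(1,2) jK, of m'] True by blast
      ultimately show ?thesis unfolding ws by simp
    next
      case False
      then obtain s where v: "valley K s j" by blast
      have s1: "1 \<le> s" "s \<le> K" using v unfolding valley_def by auto
      have le: "x \<le> j K" using vC2[OF v] nv unfolding x_def by (meson not_le)
      have sK: "s < K"
      proof (rule ccontr)
        assume "\<not> s < K" then have "s = K" using s1 by simp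
        then show False using vC1[of K j] v le nv unfolding x_def by blast
      qed
      have c1: "w K m j = Rv K s \<phi> j * (- qpow L (- \<phi> K))"
        using IH v cfv_lt[OF sK] unfolding \<phi>_def by metis
      have "w K m' j = cfv K s \<phi>' j" using Suc.IH[OF K1(1,2) jK, of m'] v unfolding \<phi>'_def by blast
      also have "\<dots> = Rv K s \<phi>' j * (- qpow L (- \<phi>' K))" by (rule cfv_lt[OF sK])
      also have "\<dots> = Rv K s \<phi> j * (- qpow L (- (\<phi> K - 1)))"
      proof -
        have "Rv K s \<phi>' j = Rv K s \<phi> j" using Rv_cong[OF s1(1) sK] sh sK by auto
        moreover have "\<phi>' K = \<phi> K - 1" using sh le K1 by simp
        ultimately show ?thesis by simp
      qed
      finally have c2: "w K m' j = Rv K s \<phi> j * (- qpow L (- (\<phi> K - 1)))" .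
      have "w (Suc K) m j = g (Suc K) x * Rv K s \<phi> j * qnum L (Phi (Suc K) x m) *
          (- qpow L (- \<phi> K) - qpow L (-1) * (- qpow L (- (\<phi> K - 1))))"
        unfolding ws c1 c2 using le by (simp add: algebra_simps)
      then show ?thesis unfolding qpow_id3 by simp
    qed
    show ?thesis using part1 part2 unfolding \<phi>_def by blast
  qed
qed

lemma valley_unique: "valley k s j \<Longrightarrow> valley k s' j \<Longrightarrow> s = s'"
proof (rule ccontr)
  assume v: "valley k s j" "valley k s' j" and ne: "s \<noteq> s'"
  show False
  proof (cases "s < s'")
    case True
    then have "j s < j (s+1)" "j (s+1) \<le> j s" using v unfolding valley_def by auto
    then show False by simp
  next
    case False
    then have "s' < s" using ne by simp
    then have "j s' < j (s'+1)" "j (s'+1) \<le> j s'" using v unfolding valley_def by auto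
    then show False by simp
  qed
qed

lemma Th_final: "1 \<le> n \<Longrightarrow> Th n (bv n l m) = (\<lambda>kk. \<Sum>s\<in>{1..n}. \<Sum>j\<in>{j\<in>Sq n. valley n s j}.
     cfv n s (phis m j) j * bv n l (addi m (dsum n j)) kk)"
proof
  fix kk assume n1: "1 \<le> n"
  let ?f = "\<lambda>j. w n m j * bv n l (addi m (dsum n j)) kk"
  let ?V = "\<lambda>s. {j\<in>Sq n. valley n s j}"
  have jJ: "\<forall>i\<in>{1..n}. j i \<in> J i" if "j \<in> Sq n" for j using that unfolding Sq_def by auto
  have "Th n (bv n l m) kk = (\<Sum>j\<in>Sq n. ?f j)" using Th_bv[OF n1 order_refl] by simp
  also have "\<dots> = (\<Sum>j\<in>(\<Union>s\<in>{1..n}. ?V s). ?f j)"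
  proof (rule sum.mono_neutral_right[OF finite_Sq])
    show "(\<Union>s\<in>{1..n}. ?V s) \<subseteq> Sq n" by auto
    show "\<forall>j\<in>Sq n - (\<Union>s\<in>{1..n}. ?V s). ?f j = 0"
    proof
      fix j assume j: "j \<in> Sq n - (\<Union>s\<in>{1..n}. ?V s)"
      then have "\<forall>s. \<not> valley n s j" unfolding valley_def by auto
      then show "?f j = 0" using CF[OF n1 order_refl jJ] j by auto
    qed
  qed
  also have "\<dots> = (\<Sum>s\<in>{1..n}. \<Sum>j\<in>?V s. ?f j)"
    by (rule sum.UNION_disjoint) (auto simp: finite_Sq dest: valley_unique)
  also have "\<dots> = (\<Sum>s\<in>{1..n}. \<Sum>j\<in>?V s. cfv n s (phis m j) j * bv n l (addi m (dsum n j)) kk)"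
    using CF[OF n1 order_refl jJ] by (intro sum.cong refl) auto
  finally show "Th n (bv n l m) kk = (\<Sum>s\<in>{1..n}. \<Sum>j\<in>?V s. cfv n s (phis m j) j * bv n l (addi m (dsum n j)) kk)" .
qed

end


lemma sum_ind:
  assumes "finite A" "\<And>k. k \<in> A \<Longrightarrow> (Q k \<longleftrightarrow> k = b \<and> P)"
  shows "(\<Sum>k\<in>A. if Q k then (1::'a::{comm_monoid_add,one}) else 0) = (if b \<in> A \<and> P then 1 else 0)"
proof -
  have "(\<Sum>k\<in>A. if Q k then (1::'a) else 0) = (\<Sum>k\<in>A. if k = b then (if P then 1 else 0) else 0)"
    using assms(2) by (intro sum.cong) auto
  also have "\<dots> = (if b \<in> A \<and> P then 1 else 0)" using assms(1) by (simp add: sum.delta)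
  finally show ?thesis .
qed

lemma ent_add: "ent n (\<lambda>p q. c1 p q + c2 p q) i j = ent n c1 i j + ent n c2 i j"
  unfolding ent_def by simp
lemma ent_scale: "ent n (\<lambda>p q. x * c p q) i j = x * ent n c i j"
  unfolding ent_def by simp
lemma ent_cong: "(\<forall>p q. tri n p q \<longrightarrow> c p q = c' p q) \<Longrightarrow> ent n c i j = ent n c' i j"
  unfolding ent_def by simp
lemma ent_Ints: "ent n (\<lambda>p q. of_int (d p q)) i j \<in> \<int>"
  unfolding ent_def by simp

lemma Mfun_add: "Mfun n (\<lambda>p q. c1 p q + c2 p q) i j = Mfun n c1 i j + Mfun n c2 i j"
proof -
  have e: "(x1::complex) + x2 - (y1 + y2) = (x1 - y1) + (x2 - y2)" for x1 x2 y1 y2 by simp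
  show ?thesis unfolding Mfun_def ent_add e sum.distrib by simp
qed
lemma Mfun_scale: "Mfun n (\<lambda>p q. x * c p q) i j = x * Mfun n c i j"
  unfolding Mfun_def ent_scale by (simp add: sum_distrib_left algebra_simps)
lemma Mfun_cong: "(\<forall>p q. tri n p q \<longrightarrow> c p q = c' p q) \<Longrightarrow> Mfun n c i j = Mfun n c' i j"
  unfolding Mfun_def using ent_cong[of n c c'] by simp
lemma Mfun_Ints: "Mfun n (\<lambda>p q. of_int (d p q)) i j \<in> \<int>"
  unfolding Mfun_def by (intro Ints_add Ints_sum Ints_diff ent_Ints)

lemma Nfun_add: "Nfun n (\<lambda>p q. c1 p q + c2 p q) i j = Nfun n c1 i j + Nfun n c2 i j"
  unfolding Nfun_def ent_add by (simp add: algebra_simps)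
lemma Nfun_scale: "Nfun n (\<lambda>p q. x * c p q) i j = x * Nfun n c i j"
  unfolding Nfun_def ent_scale by (simp add: algebra_simps)
lemma Nfun_cong: "(\<forall>p q. tri n p q \<longrightarrow> c p q = c' p q) \<Longrightarrow> Nfun n c i j = Nfun n c' i j"
  unfolding Nfun_def using ent_cong[of n c c'] by simp
lemma Nfun_Ints: "Nfun n (\<lambda>p q. of_int (d p q)) i j \<in> \<int>"
  unfolding Nfun_def by (intro Ints_diff ent_Ints)

lemma shiftc_addi: "shiftc (addi m d) b = (\<lambda>p q. shiftc m b p q + of_int (d p q))"
  unfolding shiftc_def addi_def by (simp add: fun_eq_iff)

lemma shiftc_normlab: "tri n p q \<Longrightarrow>
   shiftc m b p q = shiftc (normlab n l m) b p q + of_nat l * of_int (m p q div int l)"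
  unfolding shiftc_def normlab_def
proof -
  assume "tri n p q"
  have "m p q = m p q mod int l + int l * (m p q div int l)" by simp
  then have "(of_int (m p q) :: complex) = of_int (m p q mod int l) + of_nat l * of_int (m p q div int l)"
    by (metis of_int_add of_int_mult of_int_of_nat_eq)
  then show "of_int (m p q) + b p q =
    of_int ((\<lambda>i j. if tri n i j then m i j mod int l else 0) p q) + b p q + of_nat l * of_int (m p q div int l)"
    using \<open>tri n p q\<close> by simp
qed

lemma Mfun_normlab: "\<exists>t. Mfun n (shiftc m b) i j = Mfun n (shiftc (normlab n l m) b) i j + of_int t * of_nat l"
proof -
  have "Mfun n (shiftc m b) i j = Mfun n (\<lambda>p q. shiftc (normlab n l m) b p q + of_nat l * of_int (m p q div int l)) i j"
    by (rule Mfun_cong) (simp add: shiftc_normlab)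
  also have "\<dots> = Mfun n (shiftc (normlab n l m) b) i j + of_nat l * Mfun n (\<lambda>p q. of_int (m p q div int l)) i j"
    by (simp add: Mfun_add Mfun_scale)
  finally show ?thesis using Mfun_Ints[of n "\<lambda>p q. m p q div int l" i j]
    by (metis Ints_cases mult.commute)
qed

lemma Nfun_normlab: "\<exists>t. Nfun n (shiftc m b) i j = Nfun n (shiftc (normlab n l m) b) i j + of_int t * of_nat l"
proof -
  have "Nfun n (shiftc m b) i j = Nfun n (\<lambda>p q. shiftc (normlab n l m) b p q + of_nat l * of_int (m p q div int l)) i j"
    by (rule Nfun_cong) (simp add: shiftc_normlab)
  also have "\<dots> = Nfun n (shiftc (normlab n l m) b) i j + of_nat l * Nfun n (\<lambda>p q. of_int (m p q div int l)) i j"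
    by (simp add: Nfun_add Nfun_scale)
  finally show ?thesis using Nfun_Ints[of n "\<lambda>p q. m p q div int l" i j]
    by (metis Ints_cases mult.commute)
qed

lemma ent_unit: "ent n (\<lambda>p q. of_int (unitv a c p q)) r p = (if p = c \<and> (r = a \<and> tri n a c) then 1 else 0)"
  unfolding ent_def unitv_def by auto

lemma sum_unit_row: "finite A \<Longrightarrow> (\<Sum>p\<in>A. ent n (\<lambda>p q. of_int (unitv a c p q)) r p)
   = (if c \<in> A \<and> (r = a \<and> tri n a c) then 1 else 0)"
  unfolding ent_unit by (rule sum_ind) simp_all

lemma Mfun_unit: "Mfun n (\<lambda>p q. of_int (unitv a c p q)) i j =
   (if c \<in> {i-1..j-1} \<and> (i = a \<and> tri n a c) then 1 else 0)
 - (if c \<in> {i-1..j-1} \<and> (i - 1 = a \<and> tri n a c) then 1 else 0)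
 + ((if c \<in> {i..j} \<and> (i = a \<and> tri n a c) then 1 else 0)
 - (if c \<in> {i..j} \<and> (i + 1 = a \<and> tri n a c) then 1 else 0))"
  unfolding Mfun_def sum_subtractf by (simp only: sum_unit_row finite_atLeastAtMost)

lemma alpha_eq: "i \<le> n \<Longrightarrow> alpha n i x p q =
   (if x \<le> p \<and> p < i \<and> q + i = n + p + 1 then 1 else 0) - (if x \<le> p \<and> p \<le> i \<and> q + i = n + p then 1 else 0)"
  unfolding alpha_def unitv_def
  by (subst (1 2) sum_ind[where b = p and P = "q + i = n + p"] sum_ind[where b = "p+1" and P = "q + i = n + p + 1"]; auto)




lemma MU1: "1 \<le> k \<Longrightarrow> k + 1 \<le> n \<Longrightarrow> k \<le> y \<Longrightarrow> y \<le> n \<Longrightarrow> k + 1 \<le> x \<Longrightarrow>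
   Mfun n (\<lambda>p q. of_int (unitv k y p q)) (k+1) x = - (if y < x then 1 else 0)"
proof -
  assume a: "1 \<le> k" "k + 1 \<le> n" "k \<le> y" "y \<le> n" "k + 1 \<le> x"
  have t: "tri n k y" using a unfolding tri_def by simp
  have e: "(y \<in> {k+1-1..x-1}) = (y < x)" using a by auto
  show ?thesis unfolding Mfun_unit using t e by simp
qed

lemma MU2: "1 \<le> k \<Longrightarrow> k + 1 \<le> n \<Longrightarrow> k + 1 \<le> x \<Longrightarrow> x \<le> n \<Longrightarrow>
   Mfun n (\<lambda>p q. of_int (unitv (k+1) x p q)) k y = - (if x \<le> y then 1 else 0)"
proof -
  assume a: "1 \<le> k" "k + 1 \<le> n" "k + 1 \<le> x" "x \<le> n"
  have t: "tri n (k+1) x" using a unfolding tri_def by simp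
  have e: "(x \<in> {k..y}) = (x \<le> y)" using a by auto
  have ne: "k \<noteq> k + 1" "k - 1 \<noteq> k + 1" by auto
  show ?thesis unfolding Mfun_unit using t e ne by simp
qed

lemma MU3: "i + 2 \<le> i' \<or> i' + 2 \<le> i \<Longrightarrow> Mfun n (\<lambda>p q. of_int (unitv i' x p q)) i y = 0"
proof -
  assume a: "i + 2 \<le> i' \<or> i' + 2 \<le> i"
  have ne: "i \<noteq> i'" "i - 1 \<noteq> i'" "i + 1 \<noteq> i'" using a by auto
  show ?thesis unfolding Mfun_unit using ne by simp
qed



lemma ent_alpha: "i \<le> n \<Longrightarrow> ent n (\<lambda>p q. of_int (alpha n i x p q)) p q =
  (if tri n p q then (if x \<le> p \<and> p < i \<and> q + i = n + p + 1 then 1 else 0)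
     - (if x \<le> p \<and> p \<le> i \<and> q + i = n + p then 1 else 0) else 0)"
  unfolding ent_def by (simp add: alpha_eq)

lemma NA1: "1 \<le> k \<Longrightarrow> k + 1 \<le> n \<Longrightarrow> 1 \<le> y \<Longrightarrow> y \<le> k \<Longrightarrow> 1 \<le> x \<Longrightarrow> x \<le> k + 1 \<Longrightarrow>
   Nfun n (\<lambda>p q. of_int (alpha n k y p q)) (k+1) x = - (if y < x then 1 else 0)"
proof -
  assume a: "1 \<le> k" "k + 1 \<le> n" "1 \<le> y" "y \<le> k" "1 \<le> x" "x \<le> k + 1"
  have kn: "k \<le> n" using a by simp
  have e1: "ent n (\<lambda>p q. of_int (alpha n k y p q)) (x - 1) (n - (k + 1) + x) = - (if y < x then 1 else 0)"
    unfolding ent_alpha[OF kn] tri_def using a by auto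
  have e2: "ent n (\<lambda>p q. of_int (alpha n k y p q)) x (n - (k + 1) + x) = 0"
    unfolding ent_alpha[OF kn] tri_def using a by auto
  show ?thesis unfolding Nfun_def e1 e2 by simp
qed

lemma NA2: "1 \<le> k \<Longrightarrow> k + 1 \<le> n \<Longrightarrow> 1 \<le> y \<Longrightarrow> y \<le> k \<Longrightarrow> 1 \<le> x \<Longrightarrow> x \<le> k + 1 \<Longrightarrow>
   Nfun n (\<lambda>p q. of_int (alpha n (k+1) x p q)) k y = - (if x \<le> y then 1 else 0)"
proof -
  assume a: "1 \<le> k" "k + 1 \<le> n" "1 \<le> y" "y \<le> k" "1 \<le> x" "x \<le> k + 1"
  have kn: "k + 1 \<le> n" using a by simp
  have e1: "ent n (\<lambda>p q. of_int (alpha n (k+1) x p q)) (y - 1) (n - k + y) = 0"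
    unfolding ent_alpha[OF kn] tri_def using a by auto
  have e2: "ent n (\<lambda>p q. of_int (alpha n (k+1) x p q)) y (n - k + y) = (if x \<le> y then 1 else 0)"
    unfolding ent_alpha[OF kn] tri_def using a by auto
  show ?thesis unfolding Nfun_def e1 e2 by simp
qed

lemma NA3: "i' \<le> n \<Longrightarrow> i \<le> n \<Longrightarrow> i + 2 \<le> i' \<or> i' + 2 \<le> i \<Longrightarrow> 1 \<le> y \<Longrightarrow> y \<le> i \<Longrightarrow>
   Nfun n (\<lambda>p q. of_int (alpha n i' x p q)) i y = 0"
proof -
  assume a: "i' \<le> n" "i \<le> n" "i + 2 \<le> i' \<or> i' + 2 \<le> i" "1 \<le> y" "y \<le> i"
  have e1: "ent n (\<lambda>p q. of_int (alpha n i' x p q)) (y - 1) (n - i + y) = 0"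
    unfolding ent_alpha[OF a(1)] tri_def using a by auto
  have e2: "ent n (\<lambda>p q. of_int (alpha n i' x p q)) y (n - i + y) = 0"
    unfolding ent_alpha[OF a(1)] tri_def using a by auto
  show ?thesis unfolding Nfun_def e1 e2 by simp
qed

lemma Mshift: "Mfun n (shiftc (addi m d) b) i y = Mfun n (shiftc m b) i y + Mfun n (\<lambda>p q. of_int (d p q)) i y"
  unfolding shiftc_addi by (rule Mfun_add)

lemma Nshift: "Nfun n (shiftc (addi m d) b) i y = Nfun n (shiftc m b) i y + Nfun n (\<lambda>p q. of_int (d p q)) i y"
  unfolding shiftc_addi by (rule Nfun_add)

lemma theta_F:
  assumes l0: "l > 0" and el: "exp L ^ l = 1" and qD: "qpow L 1 \<noteq> qpow L (-1)"
  shows "theta n l L (Fop n l L a b lam) (Fth n l L a b lam) (\<lambda>i. {i..n}) a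
     (\<lambda>i j m. Mfun n (shiftc m b) i j - lam i) unitv"
proof (unfold_locales)
  show "islin (Fop n l L a b lam i)" for i unfolding Fop_def by (rule lin_islin)
  show "Fop n l L a b lam i (bv n l m) =
      (\<lambda>k. \<Sum>j\<in>{i..n}. a i j * qnum L (Mfun n (shiftc m b) i j - lam i) * bv n l (addi m (unitv i j)) k)"
    for i m
  proof -
    have q: "qnum L (Mfun n (shiftc (normlab n l m) b) i j - lam i) = qnum L (Mfun n (shiftc m b) i j - lam i)" for j
    proof -
      obtain t where t: "Mfun n (shiftc m b) i j = Mfun n (shiftc (normlab n l m) b) i j + of_int t * of_nat l"
        using Mfun_normlab by blast
      show ?thesis unfolding t using qnum_period[OF el, of "Mfun n (shiftc (normlab n l m) b) i j - lam i" t]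
        by (simp add: algebra_simps)
    qed
    show ?thesis unfolding Fop_def lin_bv[OF l0] Fbas_def q bv_addi_normlab[OF l0] ..
  qed
  show "Fth n l L a b lam (Suc 0) = Fop n l L a b lam (Suc 0)" by simp
  show "Fth n l L a b lam (Suc (Suc k)) =
      qcomm (Fop n l L a b lam (Suc (Suc k))) (Fth n l L a b lam (Suc k)) (qpow L (- 1))" for k by simp
  show "Mfun n (shiftc (addi m (unitv k y)) b) (k + 1) x - lam (k + 1) =
       Mfun n (shiftc m b) (k + 1) x - lam (k + 1) - (if y < x then 1 else 0)"
    if "1 \<le> k" "k + 1 \<le> n" "y \<in> {k..n}" "x \<in> {k + 1..n}" for k x y m
    using that MU1[of k n y x] unfolding Mshift by simp
  show "Mfun n (shiftc (addi m (unitv (k + 1) x)) b) k y - lam k =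
       Mfun n (shiftc m b) k y - lam k - (if x \<le> y then 1 else 0)"
    if "1 \<le> k" "k + 1 \<le> n" "y \<in> {k..n}" "x \<in> {k + 1..n}" for k x y m
    using that MU2[of k n x y] unfolding Mshift by simp
  show "Mfun n (shiftc (addi m (unitv i' x)) b) i y - lam i = Mfun n (shiftc m b) i y - lam i"
    if "1 \<le> i" "i \<le> n" "1 \<le> i'" "i' \<le> n" "i + 2 \<le> i' \<or> i' + 2 \<le> i" "y \<in> {i..n}" "x \<in> {i'..n}"
    for i i' x y m
    using that unfolding Mshift by (simp add: MU3)
qed (auto simp: qD)

lemma theta_E:
  assumes l0: "l > 0" and el: "exp L ^ l = 1" and qD: "qpow L 1 \<noteq> qpow L (-1)"
  shows "theta n l L (Eop n l L a b) (Eth n l L a b) (\<lambda>i. {1..i}) (\<lambda>i j. apow n a (alpha n i j))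
     (\<lambda>i j m. Nfun n (shiftc m b) i j) (alpha n)"
proof (unfold_locales)
  show "islin (Eop n l L a b i)" for i unfolding Eop_def by (rule lin_islin)
  show "Eop n l L a b i (bv n l m) =
      (\<lambda>k. \<Sum>j\<in>{1..i}. apow n a (alpha n i j) * qnum L (Nfun n (shiftc m b) i j) * bv n l (addi m (alpha n i j)) k)"
    for i m
  proof -
    have q: "qnum L (Nfun n (shiftc (normlab n l m) b) i j) = qnum L (Nfun n (shiftc m b) i j)" for j
    proof -
      obtain t where t: "Nfun n (shiftc m b) i j = Nfun n (shiftc (normlab n l m) b) i j + of_int t * of_nat l"
        using Nfun_normlab by blast
      show ?thesis unfolding t using qnum_period[OF el, of "Nfun n (shiftc (normlab n l m) b) i j" t]
        by (simp add: algebra_simps)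
    qed
    show ?thesis unfolding Eop_def lin_bv[OF l0] Ebas_def q bv_addi_normlab[OF l0] ..
  qed
  show "Eth n l L a b (Suc 0) = Eop n l L a b (Suc 0)" by simp
  show "Eth n l L a b (Suc (Suc k)) =
      qcomm (Eop n l L a b (Suc (Suc k))) (Eth n l L a b (Suc k)) (qpow L (- 1))" for k by simp
  show "Nfun n (shiftc (addi m (alpha n k y)) b) (k + 1) x =
       Nfun n (shiftc m b) (k + 1) x - (if y < x then 1 else 0)"
    if "1 \<le> k" "k + 1 \<le> n" "y \<in> {1..k}" "x \<in> {1..k + 1}" for k x y m
    using that NA1[of k n y x] unfolding Nshift by simp
  show "Nfun n (shiftc (addi m (alpha n (k + 1) x)) b) k y =
       Nfun n (shiftc m b) k y - (if x \<le> y then 1 else 0)"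
    if "1 \<le> k" "k + 1 \<le> n" "y \<in> {1..k}" "x \<in> {1..k + 1}" for k x y m
    using that NA2[of k n y x] unfolding Nshift by simp
  show "Nfun n (shiftc (addi m (alpha n i' x)) b) i y = Nfun n (shiftc m b) i y"
    if "1 \<le> i" "i \<le> n" "1 \<le> i'" "i' \<le> n" "i + 2 \<le> i' \<or> i' + 2 \<le> i" "y \<in> {1..i}" "x \<in> {1..i'}"
    for i i' x y m
    using that unfolding Nshift by (simp add: NA3)
qed (auto simp: qD)


lemma finite_T: "finite {p. tri n (fst p) (snd p)}"
proof -
  have "{p. tri n (fst p) (snd p)} \<subseteq> {1..n} \<times> {1..n}" unfolding tri_def by auto
  then show ?thesis by (rule finite_subset) simp
qed

lemma apow_sum:
  assumes nz: "\<forall>i j. tri n i j \<longrightarrow> a i j \<noteq> 0" and fin: "finite A"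
  shows "apow n a (\<lambda>p q. \<Sum>k\<in>A. d k p q) = (\<Prod>k\<in>A. apow n a (d k))"
  using fin
proof (induction A rule: finite_induct)
  case empty then show ?case unfolding apow_def by simp
next
  case (insert x F)
  have "apow n a (\<lambda>p q. \<Sum>k\<in>insert x F. d k p q)
      = (\<Prod>p\<in>{p. tri n (fst p) (snd p)}. a (fst p) (snd p) powi d x (fst p) (snd p)
           * a (fst p) (snd p) powi (\<Sum>k\<in>F. d k (fst p) (snd p)))"
    unfolding apow_def using insert nz by (intro prod.cong refl) (simp add: power_int_add)
  also have "\<dots> = apow n a (d x) * apow n a (\<lambda>p q. \<Sum>k\<in>F. d k p q)"
    unfolding apow_def by (rule prod.distrib)
  finally show ?case using insert by simp
qed

lemma apow_unit: "tri n i j \<Longrightarrow> apow n a (unitv i j) = a i j"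
proof -
  assume t: "tri n i j"
  have "apow n a (unitv i j) = (\<Prod>p\<in>{p. tri n (fst p) (snd p)}. if p = (i, j) then a i j else 1)"
    unfolding apow_def unitv_def by (intro prod.cong refl) auto
  also have "\<dots> = a i j" using t finite_T[of n] by (simp add: prod.delta)
  finally show ?thesis .
qed

lemma prod_qpow: "finite A \<Longrightarrow> (\<Prod>i\<in>A. qpow L (f i)) = qpow L (\<Sum>i\<in>A. f i)"
  unfolding qpow_def by (simp add: sum_distrib_right exp_sum)

lemma prod_mqpow: "finite A \<Longrightarrow> (\<Prod>i\<in>A. - qpow L (- f i)) = (-1) ^ card A * qpow L (- (\<Sum>i\<in>A. f i))"
proof -
  assume f: "finite A"
  have "(\<Prod>i\<in>A. - qpow L (- f i)) = (\<Prod>i\<in>A. (-1) * qpow L (- f i))" by simp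
  also have "\<dots> = (\<Prod>i\<in>A. (-1::complex)) * (\<Prod>i\<in>A. qpow L (- f i))" by (rule prod.distrib)
  also have "\<dots> = (-1) ^ card A * (\<Prod>i\<in>A. qpow L (- f i))" by simp
  also have "\<dots> = (-1) ^ card A * qpow L (- (\<Sum>i\<in>A. f i))" using prod_qpow[OF f, of L "\<lambda>i. - f i"]
    by (simp add: sum_negf)
  finally show ?thesis .
qed

lemma RE_one: "r \<in> RE n s \<Longrightarrow> 1 \<le> i \<Longrightarrow> i \<le> s \<Longrightarrow> s \<le> n \<Longrightarrow> r i = 1"
proof (induction i)
  case 0 then show ?case by simp
next
  case (Suc i)
  show ?case
  proof (cases "i = 0")
    case True
    have o: "1 \<in> {1..n}" using Suc.prems by simp
    have h: "\<forall>k\<in>{1..n}. 1 \<le> r k \<and> r k \<le> k" using Suc.prems(1) unfolding RE_def by blast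
    then have "1 \<le> r 1 \<and> r 1 \<le> 1" using o by blast
    then show ?thesis using True by simp
  next
    case False
    then have "r i = 1" using Suc by auto
    moreover have "r (Suc i) \<le> r i" "1 \<le> r (Suc i)" using Suc.prems False unfolding RE_def Rset_def by auto
    ultimately show ?thesis by simp
  qed
qed

lemma RF_id: "r \<in> RF n s \<Longrightarrow> 1 \<le> s \<Longrightarrow> s \<le> i \<Longrightarrow> i \<le> n \<Longrightarrow> r i = i"
proof (induction "n - i" arbitrary: i)
  case 0
  then have i: "i = n" "n \<in> {1..n}" by auto
  have h: "\<forall>k\<in>{1..n}. k \<le> r k \<and> r k \<le> n" using 0(2) unfolding RF_def by blast
  then have "n \<le> r n \<and> r n \<le> n" using i by blast
  then show ?case using i by simp
next
  case (Suc d)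
  then have "r (Suc i) = Suc i" by auto
  moreover have "r i < r (Suc i)" "i \<le> r i" using Suc.prems Suc.hyps unfolding RF_def Rset_def by auto
  ultimately show ?case by simp
qed

lemma coefE:
  assumes r: "r \<in> RE n s" and s: "1 \<le> s" "s \<le> n" and nz: "\<forall>i j. tri n i j \<longrightarrow> a i j \<noteq> 0"
  shows "(\<Prod>i\<in>{1..n}. apow n a (alpha n i (r i))) * (\<Prod>i\<in>{1..<s}. qpow L (Nfun n c i (r i) - 1))
     * qnum L (Nfun n c s (r s)) * (\<Prod>i\<in>{s<..n}. - qpow L (- Nfun n c i (r i)))
   = (-1) ^ (s + n) * apow n a (alphar n r) * qpow L (Dfun n c s r + 1 - of_nat s)
     * qnum L (- ent n c 1 (n - s + 1))"
proof -
  have ap: "(\<Prod>i\<in>{1..n}. apow n a (alpha n i (r i))) = apow n a (alphar n r)"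
    unfolding alphar_def using apow_sum[OF nz, of "{1..n}" "\<lambda>i. alpha n i (r i)"] by simp
  have rs: "r s = 1" using RE_one[OF r s(1) order_refl s(2)] .
  have qs: "Nfun n c s (r s) = - ent n c 1 (n - s + 1)"
    unfolding rs Nfun_def ent_def tri_def by simp
  have s1: "(\<Sum>i\<in>{1..<s}. Nfun n c i (r i) - 1) = - (\<Sum>k\<in>{n-s+2..n}. ent n c 1 k) - (of_nat s - 1)"
  proof -
    have "(\<Sum>i\<in>{1..<s}. Nfun n c i (r i)) = (\<Sum>i\<in>{1..<s}. - ent n c 1 (n - i + 1))"
      using RE_one[OF r] s by (intro sum.cong refl) (auto simp: Nfun_def ent_def tri_def)
    also have "\<dots> = - (\<Sum>k\<in>{n-s+2..n}. ent n c 1 k)"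
      unfolding sum_negf
      by (rule arg_cong[where f = uminus], rule sum.reindex_bij_witness[where i = "\<lambda>k. n + 1 - k" and j = "\<lambda>i. n - i + 1"])
        (use s in auto)
    finally show ?thesis using s by (simp add: sum_subtractf of_nat_diff)
  qed
  have s2: "(\<Sum>i\<in>{s<..n}. Nfun n c i (r i)) = (\<Sum>k\<in>{s+1..n}. ent n c (r k - 1) (n - k + r k) - ent n c (r k) (n - k + r k))"
    unfolding Nfun_def by (rule sum.cong) auto
  have sg: "(-1::complex) ^ card {s<..n} = (-1) ^ (s + n)"
  proof -
    have e: "s + n = (n - s) + 2 * s" using s by simp
    have "(-1::complex) ^ (s + n) = (-1) ^ (n - s) * ((-1) ^ 2) ^ s"
      unfolding e power_add power_mult ..
    then show ?thesis by simp
  qed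
  have ex: "(\<Sum>i\<in>{1..<s}. Nfun n c i (r i) - 1) + - (\<Sum>i\<in>{s<..n}. Nfun n c i (r i))
      = Dfun n c s r + 1 - of_nat s"
    unfolding s1 s2 Dfun_def by (simp add: algebra_simps)
  have "(\<Prod>i\<in>{1..<s}. qpow L (Nfun n c i (r i) - 1)) * (\<Prod>i\<in>{s<..n}. - qpow L (- Nfun n c i (r i)))
      = (-1) ^ (s + n) * qpow L (Dfun n c s r + 1 - of_nat s)"
    unfolding prod_qpow[OF finite_atLeastLessThan] prod_mqpow[OF finite_greaterThanAtMost] sg
      ex[symmetric] qpow_add by (simp add: algebra_simps)
  then show ?thesis unfolding ap qs by (simp add: algebra_simps)
qed


definition rsum :: "nat \<Rightarrow> carr \<Rightarrow> nat \<Rightarrow> nat \<Rightarrow> nat \<Rightarrow> complex" where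
  "rsum n c k a b = (\<Sum>p\<in>{a..<b}. ent n c k p)"

lemma rsum_split: "a \<le> b \<Longrightarrow> b \<le> d \<Longrightarrow> rsum n c k a b + rsum n c k b d = rsum n c k a d"
  unfolding rsum_def by (rule sum.atLeastLessThan_concat)

lemma rsum_Suc: "a \<le> b \<Longrightarrow> rsum n c k a (Suc b) = rsum n c k a b + ent n c k b"
  unfolding rsum_def by simp

lemma rsum_row0: "rsum n c 0 a b = 0"
  unfolding rsum_def ent_def tri_def by simp

lemma rsum_below: "1 \<le> k \<Longrightarrow> k \<le> b \<Longrightarrow> rsum n c k (k-1) b = rsum n c k k b"
proof -
  assume a: "1 \<le> k" "k \<le> b"
  have "rsum n c k (k-1) b = rsum n c k (k-1) k + rsum n c k k b" using a by (intro rsum_split[symmetric]) auto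
  moreover have "rsum n c k (k-1) k = 0" unfolding rsum_def using a
    by (intro sum.neutral) (auto simp: ent_def tri_def)
  ultimately show ?thesis by simp
qed

lemma rsum_abovek: "rsum n c (Suc k) k b = rsum n c (Suc k) (Suc k) b"
proof (cases "k < b")
  case True
  have "rsum n c (Suc k) k b = rsum n c (Suc k) k (Suc k) + rsum n c (Suc k) (Suc k) b"
    using True by (intro rsum_split[symmetric]) auto
  moreover have "rsum n c (Suc k) k (Suc k) = 0" unfolding rsum_def by (simp add: ent_def tri_def)
  ultimately show ?thesis by simp
next
  case False then show ?thesis unfolding rsum_def by simp
qed

lemma Mfun_rsum: "1 \<le> i \<Longrightarrow> i \<le> j \<Longrightarrow> Mfun n c i j =
   rsum n c i (i-1) j - rsum n c (i-1) (i-1) j + rsum n c i i (Suc j) - rsum n c (i+1) i (Suc j)"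
proof -
  assume a: "1 \<le> i" "i \<le> j"
  have e1: "{i-1..j-1} = {i-1..<j}" "{i..j} = {i..<Suc j}" using a by auto
  show ?thesis unfolding Mfun_def rsum_def e1 sum_subtractf by simp
qed

lemma Mfun_diag: "1 \<le> s \<Longrightarrow> Mfun n c s s = ent n c s s - ent n c (s-1) (s-1)"
  unfolding Mfun_def by (auto simp: ent_def tri_def)

lemma keyF_ind:
  assumes dec: "\<forall>i. 1 \<le> i \<and> i < s \<longrightarrow> r (i+1) \<le> r i"
    and bnd: "\<forall>i\<in>{1..n}. i \<le> r i \<and> r i \<le> n" and t: "1 \<le> t" "t \<le> s" and sn: "s \<le> n"
  shows "(\<Sum>i\<in>{1..<t}. Mfun n c i (r i)) = rsum n c 1 1 (Suc n)
     + (\<Sum>k\<in>{1..<t}. rsum n c k (r (k+1)) (r k))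
     - (\<Sum>k\<in>{1..<t}. rsum n c k (Suc (r k)) (Suc (if k = 1 then n else r (k-1))))
     + rsum n c (t-1) (t-1) (r t) - rsum n c t t (Suc (if t = 1 then n else r (t-1)))"
  using t
proof (induction t rule: nat_induct_at_least)
  case base
  then show ?case by (simp add: rsum_row0)
next
  case (Suc t)
  have t1: "1 \<le> t" "Suc t \<le> s" using Suc by auto
  have rt: "t \<le> r t" "r t \<le> n" using bnd t1 sn by auto
  have rt1: "Suc t \<le> r (Suc t)" "r (Suc t) \<le> r t" using bnd dec t1 sn by auto
  define R where "R = (if t = 1 then n else r (t-1))"
  have rR: "r t \<le> R"
  proof (cases "t = 1")
    case True then show ?thesis using rt R_def by simp
  next
    case False then show ?thesis using dec t1 R_def by (metis Suc_diff_1 Suc_eq_plus1 Suc_leI diff_less le_trans less_imp_le_nat less_numeral_extra(1) nat_neq_iff not_le t1(1) linorder_not_le Suc_lessD order_less_le_trans)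
  qed
  have M: "Mfun n c t (r t) = rsum n c t t (r t) - rsum n c (t-1) (t-1) (r t) + rsum n c t t (Suc (r t))
      - rsum n c (Suc t) (Suc t) (Suc (r t))"
    using Mfun_rsum[OF t1(1) rt(1), of n c] rsum_below[OF t1(1) rt(1), of n c] rsum_abovek[of n c t] by simp
  have sp1: "rsum n c t (r (Suc t)) (r t) + rsum n c t t (r (Suc t)) = rsum n c t t (r t)"
    using rsum_split[of t "r (Suc t)" "r t" n c t] rt1 by (simp add: add.commute)
  have sp2: "rsum n c t t (Suc R) = rsum n c t t (Suc (r t)) + rsum n c t (Suc (r t)) (Suc R)"
    using rsum_split[of t "Suc (r t)" "Suc R" n c t] rt rR by simp
  have IH: "(\<Sum>i\<in>{1..<t}. Mfun n c i (r i)) = rsum n c 1 1 (Suc n)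
     + (\<Sum>k\<in>{1..<t}. rsum n c k (r (k+1)) (r k))
     - (\<Sum>k\<in>{1..<t}. rsum n c k (Suc (r k)) (Suc (if k = 1 then n else r (k-1))))
     + rsum n c (t-1) (t-1) (r t) - rsum n c t t (Suc R)"
    using Suc.IH t1 unfolding R_def by simp
  show ?case
    unfolding sum.atLeastLessThan_Suc[OF t1(1)] IH M
    using sp1 sp2 t1 by (simp add: R_def algebra_simps)
qed

lemma keyF:
  assumes r: "r \<in> RF n s" and s: "1 \<le> s" "s \<le> n"
  shows "(\<Sum>i\<in>{1..<s}. Mfun n c i (r i)) - (\<Sum>i\<in>{s<..n}. Mfun n c i (r i)) = Cfun n c s r"
proof -
  have dec: "\<forall>i. 1 \<le> i \<and> i < s \<longrightarrow> r (i+1) \<le> r i" using r unfolding RF_def Rset_def by auto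
  have bnd: "\<forall>i\<in>{1..n}. i \<le> r i \<and> r i \<le> n" using r unfolding RF_def by auto
  have rid: "r i = i" if "s \<le> i" "i \<le> n" for i using RF_id[OF r s(1) that] .
  define R where "R = (if s = 1 then n else r (s-1))"
  have sR: "s \<le> R"
  proof (cases "s = 1")
    case True then show ?thesis using s R_def by simp
  next
    case False
    then have "r s \<le> r (s-1)" using dec s by (metis One_nat_def Suc_diff_1 Suc_eq_plus1 diff_less le_numeral_extra(4) less_one linorder_not_le not_less_eq_eq)
    then show ?thesis using False R_def rid[of s] s by simp
  qed
  have tel: "(\<Sum>i\<in>{s<..t}. Mfun n c i (r i)) = ent n c t t - ent n c s s" if "s \<le> t" "t \<le> n" for t
    using that
  proof (induction t rule: dec_induct)
    case base then show ?case by simp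
  next
    case (step t)
    have e: "{s<..Suc t} = insert (Suc t) {s<..t}" using step by auto
    show ?case unfolding e using step rid[of "Suc t"] Mfun_diag[of "Suc t" n c] by simp
  qed
  have A: "(\<Sum>i\<in>{1..<s}. Mfun n c i (r i)) = rsum n c 1 1 (Suc n)
     + (\<Sum>k\<in>{1..<s}. rsum n c k (r (k+1)) (r k))
     - (\<Sum>k\<in>{1..<s}. rsum n c k (Suc (r k)) (Suc (if k = 1 then n else r (k-1))))
     + rsum n c (s-1) (s-1) (r s) - rsum n c s s (Suc R)"
    using keyF_ind[OF dec bnd s(1) order_refl s(2)] unfolding R_def by simp
  have B1: "rsum n c (s-1) (s-1) (r s) = ent n c (s-1) (s-1)"
    using rsum_Suc[of "s-1" "s-1" n c "s-1"] rid[of s] s by (simp add: rsum_def)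
  have B2: "rsum n c s s (Suc R) = ent n c s s + rsum n c s (Suc s) (Suc R)"
    using rsum_split[of s "Suc s" "Suc R" n c s] rsum_Suc[of s s n c s] sR by (simp add: rsum_def)
  have C1: "(\<Sum>k\<in>{1..s-1}. \<Sum>p\<in>{(if k+1 = 0 then n else r (k+1))..(if k = 0 then n else r k) - 1}. ent n c k p)
      = (\<Sum>k\<in>{1..<s}. rsum n c k (r (k+1)) (r k))"
  proof (intro sum.cong)
    show "{1..s-1} = {1..<s}" using s by auto
    fix k assume k: "k \<in> {1..<s}"
    then have "1 \<le> r k" using bnd s by force
    then have "{r (k+1)..r k - 1} = {r (k+1)..<r k}" by auto
    then show "(\<Sum>p\<in>{(if k+1 = 0 then n else r (k+1))..(if k = 0 then n else r k) - 1}. ent n c k p)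
        = rsum n c k (r (k+1)) (r k)" using k unfolding rsum_def by simp
  qed
  have C2: "(\<Sum>k\<in>{1..s}. \<Sum>p\<in>{(if k = 0 then n else r k) + 1..(if k-1 = 0 then n else r (k-1))}. ent n c k p)
      = (\<Sum>k\<in>{1..<s}. rsum n c k (Suc (r k)) (Suc (if k = 1 then n else r (k-1)))) + rsum n c s (Suc s) (Suc R)"
  proof -
    have e: "{1..s} = insert s {1..<s}" using s by auto
    have "(\<Sum>k\<in>{1..<s}. \<Sum>p\<in>{(if k = 0 then n else r k) + 1..(if k-1 = 0 then n else r (k-1))}. ent n c k p)
       = (\<Sum>k\<in>{1..<s}. rsum n c k (Suc (r k)) (Suc (if k = 1 then n else r (k-1))))"
    proof (intro sum.cong refl)
      fix k assume k: "k \<in> {1..<s}"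
      have "{r k + 1..(if k-1 = 0 then n else r (k-1))} = {Suc (r k)..<Suc (if k = 1 then n else r (k-1))}"
        using k by auto
      then show "(\<Sum>p\<in>{(if k = 0 then n else r k) + 1..(if k-1 = 0 then n else r (k-1))}. ent n c k p)
        = rsum n c k (Suc (r k)) (Suc (if k = 1 then n else r (k-1)))" using k unfolding rsum_def by simp
    qed
    moreover have "(\<Sum>p\<in>{(if s = 0 then n else r s) + 1..(if s-1 = 0 then n else r (s-1))}. ent n c s p)
        = rsum n c s (Suc s) (Suc R)"
    proof -
      have "{r s + 1..(if s-1 = 0 then n else r (s-1))} = {Suc s..<Suc R}"
        using s rid[of s] unfolding R_def by auto
      then show ?thesis using s unfolding rsum_def by simp
    qed
    ultimately show ?thesis unfolding e by (simp add: add.commute)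
  qed
  have r1: "rsum n c 1 1 (Suc n) = (\<Sum>k\<in>{1..n}. ent n c 1 k)"
    unfolding rsum_def by (intro sum.cong) auto
  show ?thesis
    unfolding Cfun_def Let_def C1 C2 A B1 B2 tel[OF s(2) order_refl] r1
    by (simp add: algebra_simps)
qed


lemma coefF:
  assumes r: "r \<in> RF n s" and s: "1 \<le> s" "s \<le> n" and nz: "\<forall>i j. tri n i j \<longrightarrow> a i j \<noteq> 0"
  shows "(\<Prod>i\<in>{1..n}. a i (r i)) * (\<Prod>i\<in>{1..<s}. qpow L (Mfun n c i (r i) - lam i - 1))
     * qnum L (Mfun n c s (r s) - lam s) * (\<Prod>i\<in>{s<..n}. - qpow L (- (Mfun n c i (r i) - lam i)))
   = (-1) ^ (s + n) * apow n a (epsr n r) * qpow L (Cfun n c s r - lamS n lam s + 1 - of_nat s)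
     * qnum L (- ent n c (s-1) (s-1) + ent n c s s - lam s)"
proof -
  have ap: "(\<Prod>i\<in>{1..n}. a i (r i)) = apow n a (epsr n r)"
  proof -
    have "(\<Prod>i\<in>{1..n}. a i (r i)) = (\<Prod>i\<in>{1..n}. apow n a (unitv i (r i)))"
      using r unfolding RF_def by (intro prod.cong refl) (auto simp: apow_unit tri_def)
    also have "\<dots> = apow n a (epsr n r)"
      unfolding epsr_def using apow_sum[OF nz, of "{1..n}" "\<lambda>i. unitv i (r i)"] by simp
    finally show ?thesis .
  qed
  have rs: "r s = s" using RF_id[OF r s(1) order_refl s(2)] .
  have qs: "Mfun n c s (r s) = - ent n c (s-1) (s-1) + ent n c s s"
    using Mfun_diag[OF s(1), of n c] rs by simp
  have e1: "{1..<s} = {1..s-1}" "{s<..n} = {s+1..n}" using s by auto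
  have sg: "(-1::complex) ^ card {s<..n} = (-1) ^ (s + n)"
  proof -
    have e: "s + n = (n - s) + 2 * s" using s by simp
    have "(-1::complex) ^ (s + n) = (-1) ^ (n - s) * ((-1) ^ 2) ^ s"
      unfolding e power_add power_mult ..
    then show ?thesis by simp
  qed
  have ex: "(\<Sum>i\<in>{1..<s}. Mfun n c i (r i) - lam i - 1) + - (\<Sum>i\<in>{s<..n}. Mfun n c i (r i) - lam i)
     = Cfun n c s r - lamS n lam s + 1 - of_nat s"
  proof -
    have "(\<Sum>i\<in>{1..<s}. Mfun n c i (r i) - lam i - 1) + - (\<Sum>i\<in>{s<..n}. Mfun n c i (r i) - lam i)
      = ((\<Sum>i\<in>{1..<s}. Mfun n c i (r i)) - (\<Sum>i\<in>{s<..n}. Mfun n c i (r i)))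
        - ((\<Sum>i\<in>{1..<s}. lam i) - (\<Sum>i\<in>{s<..n}. lam i)) - of_nat (s - 1)"
      by (simp add: sum_subtractf)
    also have "\<dots> = Cfun n c s r - lamS n lam s + 1 - of_nat s"
      unfolding keyF[OF r s] unfolding lamS_def e1 using s by (simp add: of_nat_diff)
    finally show ?thesis .
  qed
  have "(\<Prod>i\<in>{1..<s}. qpow L (Mfun n c i (r i) - lam i - 1)) * (\<Prod>i\<in>{s<..n}. - qpow L (- (Mfun n c i (r i) - lam i)))
      = (-1) ^ (s + n) * qpow L (Cfun n c s r - lamS n lam s + 1 - of_nat s)"
    unfolding prod_qpow[OF finite_atLeastLessThan] prod_mqpow[OF finite_greaterThanAtMost] sg
      ex[symmetric] qpow_add by (simp add: algebra_simps)
  then show ?thesis unfolding ap qs by (simp add: algebra_simps)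
qed



lemma RF_char: "r \<in> RF n s \<longleftrightarrow>
   ((\<forall>i\<in>{1..n}. r i \<in> {i..n}) \<and> (\<forall>i. i \<notin> {1..n} \<longrightarrow> r i = 0)) \<and>
   ((\<forall>i. 1 \<le> i \<and> i < s \<longrightarrow> r (i+1) \<le> r i) \<and> (\<forall>i. s \<le> i \<and> i < n \<longrightarrow> r i < r (i+1)))"
proof -
  have A: "((\<forall>k. (1 \<le> k \<and> k \<le> n \<longrightarrow> 1 \<le> r k \<and> r k \<le> n) \<and> (\<not> (1 \<le> k \<and> k \<le> n) \<longrightarrow> r k = 0))
       \<and> (\<forall>k\<in>{1..n}. k \<le> r k \<and> r k \<le> n))
     \<longleftrightarrow> ((\<forall>i\<in>{1..n}. r i \<in> {i..n}) \<and> (\<forall>i. i \<notin> {1..n} \<longrightarrow> r i = 0))"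
  proof
    assume h: "(\<forall>k. (1 \<le> k \<and> k \<le> n \<longrightarrow> 1 \<le> r k \<and> r k \<le> n) \<and> (\<not> (1 \<le> k \<and> k \<le> n) \<longrightarrow> r k = 0))
       \<and> (\<forall>k\<in>{1..n}. k \<le> r k \<and> r k \<le> n)"
    show "(\<forall>i\<in>{1..n}. r i \<in> {i..n}) \<and> (\<forall>i. i \<notin> {1..n} \<longrightarrow> r i = 0)"
    proof (intro conjI ballI allI impI)
      fix i assume "i \<in> {1..n}" then show "r i \<in> {i..n}" using h by simp
    next
      fix i assume "i \<notin> {1..n}" then show "r i = 0" using h by simp
    qed
  next
    assume h: "(\<forall>i\<in>{1..n}. r i \<in> {i..n}) \<and> (\<forall>i. i \<notin> {1..n} \<longrightarrow> r i = 0)"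
    show "(\<forall>k. (1 \<le> k \<and> k \<le> n \<longrightarrow> 1 \<le> r k \<and> r k \<le> n) \<and> (\<not> (1 \<le> k \<and> k \<le> n) \<longrightarrow> r k = 0))
       \<and> (\<forall>k\<in>{1..n}. k \<le> r k \<and> r k \<le> n)"
    proof (intro conjI ballI allI impI)
      fix k assume k: "1 \<le> k \<and> k \<le> n"
      then have "r k \<in> {k..n}" using h by simp
      then show "1 \<le> r k" "r k \<le> n" using k by auto
    next
      fix k assume "\<not> (1 \<le> k \<and> k \<le> n)" then show "r k = 0" using h by simp
    next
      fix k assume "k \<in> {1..n}" then show "k \<le> r k" "r k \<le> n" using h by auto
    qed
  qed
  show ?thesis unfolding RF_def Rset_def mem_Collect_eq using A by blast
qed

lemma RE_char: "r \<in> RE n s \<longleftrightarrow>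
   ((\<forall>i\<in>{1..n}. r i \<in> {1..i}) \<and> (\<forall>i. i \<notin> {1..n} \<longrightarrow> r i = 0)) \<and>
   ((\<forall>i. 1 \<le> i \<and> i < s \<longrightarrow> r (i+1) \<le> r i) \<and> (\<forall>i. s \<le> i \<and> i < n \<longrightarrow> r i < r (i+1)))"
proof -
  have A: "((\<forall>k. (1 \<le> k \<and> k \<le> n \<longrightarrow> 1 \<le> r k \<and> r k \<le> n) \<and> (\<not> (1 \<le> k \<and> k \<le> n) \<longrightarrow> r k = 0))
       \<and> (\<forall>k\<in>{1..n}. 1 \<le> r k \<and> r k \<le> k))
     \<longleftrightarrow> ((\<forall>i\<in>{1..n}. r i \<in> {1..i}) \<and> (\<forall>i. i \<notin> {1..n} \<longrightarrow> r i = 0))"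
  proof
    assume h: "(\<forall>k. (1 \<le> k \<and> k \<le> n \<longrightarrow> 1 \<le> r k \<and> r k \<le> n) \<and> (\<not> (1 \<le> k \<and> k \<le> n) \<longrightarrow> r k = 0))
       \<and> (\<forall>k\<in>{1..n}. 1 \<le> r k \<and> r k \<le> k)"
    show "(\<forall>i\<in>{1..n}. r i \<in> {1..i}) \<and> (\<forall>i. i \<notin> {1..n} \<longrightarrow> r i = 0)"
    proof (intro conjI ballI allI impI)
      fix i assume "i \<in> {1..n}" then show "r i \<in> {1..i}" using h by simp
    next
      fix i assume "i \<notin> {1..n}" then show "r i = 0" using h by simp
    qed
  next
    assume h: "(\<forall>i\<in>{1..n}. r i \<in> {1..i}) \<and> (\<forall>i. i \<notin> {1..n} \<longrightarrow> r i = 0)"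
    show "(\<forall>k. (1 \<le> k \<and> k \<le> n \<longrightarrow> 1 \<le> r k \<and> r k \<le> n) \<and> (\<not> (1 \<le> k \<and> k \<le> n) \<longrightarrow> r k = 0))
       \<and> (\<forall>k\<in>{1..n}. 1 \<le> r k \<and> r k \<le> k)"
    proof (intro conjI ballI allI impI)
      fix k assume k: "1 \<le> k \<and> k \<le> n"
      then have "r k \<in> {1..k}" using h by simp
      then show "1 \<le> r k" "r k \<le> n" using k by auto
    next
      fix k assume "\<not> (1 \<le> k \<and> k \<le> n)" then show "r k = 0" using h by simp
    next
      fix k assume "k \<in> {1..n}" then show "1 \<le> r k" "r k \<le> k" using h by auto
    qed
  qed
  show ?thesis unfolding RE_def Rset_def mem_Collect_eq using A by blast
qed

theorem lemma5p3:
  fixes n l :: nat and eps L :: complex and a b :: carr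
    and lam :: "nat \<Rightarrow> complex" and m :: iarr
  assumes "n \<ge> 1" and "l > 2" and "odd l" and "coprime l (n + 1)"
    and "exp L = eps" and "eps ^ l = 1" and "\<forall>k. 0 < k \<and> k < l \<longrightarrow> eps ^ k \<noteq> 1"
    and "\<forall>i j. tri n i j \<longrightarrow> a i j \<noteq> 0"
    and "m \<in> labels n l"
  shows "Fth n l L a b lam n (bv n l m) =
           (\<lambda>k. \<Sum>s\<in>{1..n}. \<Sum>r\<in>RF n s. (-1) ^ (s + n) * apow n a (epsr n r)
              * qpow L (Cfun n (shiftc m b) s r - lamS n lam s + 1 - of_nat s)
              * qnum L (- ent n (shiftc m b) (s-1) (s-1) + ent n (shiftc m b) s s - lam s)
              * bv n l (addi m (epsr n r)) k)
       \<and> Eth n l L a b n (bv n l m) =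
           (\<lambda>k. \<Sum>s\<in>{1..n}. \<Sum>r\<in>RE n s. (-1) ^ (s + n) * apow n a (alphar n r)
              * qpow L (Dfun n (shiftc m b) s r + 1 - of_nat s)
              * qnum L (- ent n (shiftc m b) 1 (n - s + 1))
              * bv n l (addi m (alphar n r)) k)"
proof -
  note n1 = assms(1) and nz = assms(8)
  have l0: "l > 0" using assms(2) by simp
  have el: "exp L ^ l = 1" using assms(5,6) by simp
  have qD: "qpow L 1 \<noteq> qpow L (-1)"
  proof
    assume "qpow L 1 = qpow L (-1)"
    then have "eps = inverse eps" using assms(5) unfolding qpow_def by (simp add: exp_minus)
    then have "eps ^ 2 = 1"
      by (metis assms(5) exp_not_eq_zero power2_eq_square right_inverse)
    then show False using assms(2,7) by auto
  qed
  interpret F: theta n l L "Fop n l L a b lam" "Fth n l L a b lam" "\<lambda>i. {i..n}" a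
     "\<lambda>i j m. Mfun n (shiftc m b) i j - lam i" unitv
    by (rule theta_F[OF l0 el qD])
  interpret E: theta n l L "Eop n l L a b" "Eth n l L a b" "\<lambda>i. {1..i}" "\<lambda>i j. apow n a (alpha n i j)"
     "\<lambda>i j m. Nfun n (shiftc m b) i j" "alpha n"
    by (rule theta_E[OF l0 el qD])
  have setF: "{j \<in> F.Sq n. F.valley n s j} = RF n s" if "s \<in> {1..n}" for s
  proof (rule set_eqI)
    fix j show "j \<in> {j \<in> F.Sq n. F.valley n s j} \<longleftrightarrow> j \<in> RF n s"
      unfolding RF_char F.Sq_def F.valley_def mem_Collect_eq using that by simp
  qed
  have setE: "{j \<in> E.Sq n. E.valley n s j} = RE n s" if "s \<in> {1..n}" for s
  proof (rule set_eqI)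
    fix j show "j \<in> {j \<in> E.Sq n. E.valley n s j} \<longleftrightarrow> j \<in> RE n s"
      unfolding RE_char E.Sq_def E.valley_def mem_Collect_eq using that by simp
  qed
  have dF: "F.dsum n r = epsr n r" for r unfolding F.dsum_def epsr_def ..
  have dE: "E.dsum n r = alphar n r" for r unfolding E.dsum_def alphar_def ..
  have cF: "F.cfv n s (F.phis m r) r = (-1) ^ (s + n) * apow n a (epsr n r)
              * qpow L (Cfun n (shiftc m b) s r - lamS n lam s + 1 - of_nat s)
              * qnum L (- ent n (shiftc m b) (s-1) (s-1) + ent n (shiftc m b) s s - lam s)"
    if "s \<in> {1..n}" "r \<in> RF n s" for s r
    unfolding F.cfv_def F.phis_def using coefF[OF that(2) _ _ nz, of L "shiftc m b" lam] that by simp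
  have cE: "E.cfv n s (E.phis m r) r = (-1) ^ (s + n) * apow n a (alphar n r)
              * qpow L (Dfun n (shiftc m b) s r + 1 - of_nat s)
              * qnum L (- ent n (shiftc m b) 1 (n - s + 1))"
    if "s \<in> {1..n}" "r \<in> RE n s" for s r
    unfolding E.cfv_def E.phis_def using coefE[OF that(2) _ _ nz, of L "shiftc m b"] that by simp
  show ?thesis
    apply (rule conjI)
    subgoal unfolding F.Th_final[OF n1] by (intro ext sum.cong refl) (simp_all add: setF cF dF)
    subgoal unfolding E.Th_final[OF n1] by (intro ext sum.cong refl) (simp_all add: setE[simplified] cE dE)
    done
qed


end
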